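(* Let $N_1,\dots,N_n$ be independent and let $\mathcal J\subseteq\{1,\dots,n\}^2$ be any set of ordered pairs ($(j,k)\in\mathcal J\Rightarrow j\le k$), $1-\alpha\in(0,1)$, $\delta=\alpha/(2|\mathcal J|)$. Put $Y_i=\varphi N_i/v_i$, $\mu_i=\mathbb E[Y_i]$, assume $\mu_1\le\dots\le\mu_n$, and set $v_{j:k}=\sum_{i=j}^kv_i$, $Z_{j:k}=\frac1{v_{j:k}}\sum_{i=j}^kv_iY_i$. In each of the following three cases, the bounds $L^\alpha_{\mathbf Y,i}=\sup_{(j,k)\in\mathcal J:\mu_i\ge\mu_k}l^\delta(Z_{j:k},v_{j:k},\varphi,\kappa)$ and $U^\alpha_{\mathbf Y,i}=\inf_{(j,k)\in\mathcal J:\mu_i\le\mu_j}u^\delta(Z_{j:k},v_{j:k},\varphi,\kappa)$ (with $\kappa$ the cumulant function of the respective family) satisfy $$\mathbb P\big(L^\alpha_{\mathbf Y,i}\le\mu_i\le U^\alpha_{\mathbf Y,i}\text{ for all }i\in\{1,\dots,n\}\big)\ge1-\alpha,$$ and they are given explicitly by: (i) Binomial case ($N_i\sim\mathrm{Bin}(v_i/\varphi,\mu_i)$, $v_i/\varphi\in\mathbb N$, $\mu_i\in(0,1)$): $L^\alpha_{\mathbf Y,i}=\sup_{(j,k)\in\mathcal J:\mu_i\ge\mu_k}q_B(\delta;v_{j:k}Z_{j:k}/\varphi,1+v_{j:k}/\varphi-v_{j:k}Z_{j:k}/\varphi)\mathbf 1_{\{Z_{j:k}>0\}}$ and $U^\alpha_{\mathbf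 Y,i}=\inf_{(j,k)\in\mathcal J:\mu_i\le\mu_j}\big[q_B(1-\delta;1+v_{j:k}Z_{j:k}/\varphi,v_{j:k}/\varphi-v_{j:k}Z_{j:k}/\varphi)\mathbf 1_{\{Z_{j:k}<1\}}+\mathbf 1_{\{Z_{j:k}=1\}}\big]$. (ii) Poisson case ($N_i\sim\mathrm{Poi}(\mu_iv_i/\varphi)$, $\mu_i>0$): $L^\alpha_{\mathbf Y,i}=\sup_{(j,k)\in\mathcal J:\mu_i\ge\mu_k}\frac{\varphi\,q_\Gamma(\delta;v_{j:k}Z_{j:k}/\varphi,1)}{v_{j:k}}\mathbf 1_{\{Z_{j:k}>0\}}$ and $U^\alpha_{\mathbf Y,i}=\inf_{(j,k)\in\mathcal J:\mu_i\le\mu_j}\frac{\varphi\,q_\Gamma(1-\delta;1+v_{j:k}Z_{j:k}/\varphi,1)}{v_{j:k}}$. (iii) Negative binomial case ($N_i$ negative binomial with shape $\gamma_i=v_i/\varphi$ and $p_i=\mu_i/(1+\mu_i)$, i.e. $\mathbb P(N_i=l)=\frac{\Gamma(l+\gamma_i)}{\Gamma(\gamma_i)\,l!}p_i^l(1-p_i)^{\gamma_i}$, $\mu_i>0$): $L^\alpha_{\mathbf Y,i}=\sup_{(j,k)\in\mathcal J:\mu_i\ge\mu_k}\frac{q_B(\delta;v_{j:k}Z_{j:k}/\varphi,v_{j:k}/\varphi)}{1-q_B(\delta;v_{j:k}Z_{j:k}/\varphi,v_{j:k}/\varphi)}\mathbf 1_{\{Z_{j:k}>0\}}$ and $U^\alpha_{\mathbf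 Y,i}=\inf_{(j,k)\in\mathcal J:\mu_i\le\mu_j}\frac{q_B(1-\delta;1+v_{j:k}Z_{j:k}/\varphi,v_{j:k}/\varphi)}{1-q_B(1-\delta;1+v_{j:k}Z_{j:k}/\varphi,v_{j:k}/\varphi)}$.
   Context: In each case $Y_i=\varphi N_i/v_i\sim\mathrm{EDF}(\theta_i,v_i,\varphi,\kappa)$ for the appropriate cumulant function $\kappa$, canonical parameter $\theta_i=h(\mu_i)$ in the interior of the effective domain, volume $v_i>0$ and dispersion $\varphi>0$ (reproductive form of the exponential dispersion family; $N_i$ is its additive form). For a random variable $W$ with mean $\mu$ in this family with volume $v$, $F(y;h(\mu),v,\varphi,\kappa)=\mathbb P(W\le y)$ and $F^*(y;h(\mu),v,\varphi,\kappa)=\mathbb P(W<y)$; $l^{\delta}(y,v,\varphi,\kappa)=\inf\{\mu:F^*(y;h(\mu),v,\varphi,\kappa)\le1-\delta\}$ and $u^{\delta}(y,v,\varphi,\kappa)=\sup\{\mu:F(y;h(\mu),v,\varphi,\kappa)\ge\delta\}$, the inf/sup being over the mean parameter space ($(0,1)$ for binomial, $(0,\infty)$ otherwise), with $\inf\emptyset$ the supremum and $\sup\emptyset$ the infimum of the mean parameter space. A set of ordered pairs is $\mathcal J\subseteq\{1,\dots,n\}^2$ with $j\le k$ for all $(j,k)\in\mathcal J$. $q_B(\delta;a,b)$ is the $\delta$-quantile of the Beta$(a,b)$ distribution; $q_\Gamma(\delta;\gamma,c)$ is the $\delta$-quantile of the gamma distribution with shape $\gamma$ and scale $c$. *)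

theory Defs
  imports "HOL-Probability.Probability"
begin

definition bin_pf :: "nat \<Rightarrow> real \<Rightarrow> nat \<Rightarrow> real" where
  "bin_pf m p l = real (m choose l) * p ^ l * (1 - p) ^ (m - l)"

definition poi_pf :: "real \<Rightarrow> nat \<Rightarrow> real" where
  "poi_pf r l = r ^ l / fact l * exp (- r)"

definition nb_pf :: "real \<Rightarrow> real \<Rightarrow> nat \<Rightarrow> real" where
  "nb_pf g p l = Gamma (real l + g) / (Gamma g * fact l) * p ^ l * (1 - p) powr g"

text \<open>The three families, parametrised as  phi v mu l  (dispersion, volume, mean):
  point probability of the additive form N with Y = phi N / v of mean mu.\<close>
definition bin_fam :: "real \<Rightarrow> real \<Rightarrow> real \<Rightarrow> nat \<Rightarrow> real" where
  "bin_fam phi v mu = bin_pf (nat \<lfloor>v / phi\<rfloor>) mu"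

definition poi_fam :: "real \<Rightarrow> real \<Rightarrow> real \<Rightarrow> nat \<Rightarrow> real" where
  "poi_fam phi v mu = poi_pf (mu * v / phi)"

definition nb_fam :: "real \<Rightarrow> real \<Rightarrow> real \<Rightarrow> nat \<Rightarrow> real" where
  "nb_fam phi v mu = nb_pf (v / phi) (mu / (1 + mu))"

definition edf_cdf :: "(real \<Rightarrow> real \<Rightarrow> real \<Rightarrow> nat \<Rightarrow> real) \<Rightarrow> real \<Rightarrow> real \<Rightarrow> real \<Rightarrow> real \<Rightarrow> real" where
  "edf_cdf fam phi v mu y = (\<Sum>l. if phi * real l / v \<le> y then fam phi v mu l else 0)"

definition edf_cdf_strict :: "(real \<Rightarrow> real \<Rightarrow> real \<Rightarrow> nat \<Rightarrow> real) \<Rightarrow> real \<Rightarrow> real \<Rightarrow> real \<Rightarrow> real \<Rightarrow> real" where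
  "edf_cdf_strict fam phi v mu y = (\<Sum>l. if phi * real l / v < y then fam phi v mu l else 0)"

definition l_delta :: "(real \<Rightarrow> real \<Rightarrow> real \<Rightarrow> nat \<Rightarrow> real) \<Rightarrow> real set \<Rightarrow> real \<Rightarrow> real \<Rightarrow> real \<Rightarrow> real \<Rightarrow> ereal" where
  "l_delta fam Theta delta y v phi =
     (let S = {mu \<in> Theta. edf_cdf_strict fam phi v mu y \<le> 1 - delta}
      in if S = {} then Sup (ereal ` Theta) else Inf (ereal ` S))"

definition u_delta :: "(real \<Rightarrow> real \<Rightarrow> real \<Rightarrow> nat \<Rightarrow> real) \<Rightarrow> real set \<Rightarrow> real \<Rightarrow> real \<Rightarrow> real \<Rightarrow> real \<Rightarrow> ereal" where
  "u_delta fam Theta delta y v phi =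
     (let S = {mu \<in> Theta. delta \<le> edf_cdf fam phi v mu y}
      in if S = {} then Inf (ereal ` Theta) else Sup (ereal ` S))"

definition beta_density :: "real \<Rightarrow> real \<Rightarrow> real \<Rightarrow> real" where
  "beta_density a b t = (if 0 < t \<and> t < 1 then t powr (a - 1) * (1 - t) powr (b - 1) / Beta a b else 0)"

definition beta_cdf :: "real \<Rightarrow> real \<Rightarrow> real \<Rightarrow> real" where
  "beta_cdf a b x = (LINT t:{..x}|lborel. beta_density a b t)"

definition q_B :: "real \<Rightarrow> real \<Rightarrow> real \<Rightarrow> real" where
  "q_B delta a b = Inf {x. delta \<le> beta_cdf a b x}"

definition gamma_density :: "real \<Rightarrow> real \<Rightarrow> real \<Rightarrow> real" where
  "gamma_density g c t = (if 0 < t then t powr (g - 1) * exp (- t / c) / (Gamma g * c powr g) else 0)"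

definition gamma_cdf :: "real \<Rightarrow> real \<Rightarrow> real \<Rightarrow> real" where
  "gamma_cdf g c x = (LINT t:{..x}|lborel. gamma_density g c t)"

definition q_Gamma :: "real \<Rightarrow> real \<Rightarrow> real \<Rightarrow> real" where
  "q_Gamma delta g c = Inf {x. delta \<le> gamma_cdf g c x}"

definition vsum :: "(nat \<Rightarrow> real) \<Rightarrow> nat \<Rightarrow> nat \<Rightarrow> real" where
  "vsum v j k = (\<Sum>i = j..k. v i)"

definition Zjk :: "real \<Rightarrow> (nat \<Rightarrow> real) \<Rightarrow> (nat \<Rightarrow> 'a \<Rightarrow> nat) \<Rightarrow> 'a \<Rightarrow> nat \<Rightarrow> nat \<Rightarrow> real" where
  "Zjk phi v N \<omega> j k = (\<Sum>i = j..k. v i * (phi * real (N i \<omega>) / v i)) / vsum v j k"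

definition conf_L :: "(nat \<times> nat) set \<Rightarrow> (nat \<Rightarrow> real) \<Rightarrow> nat \<Rightarrow> (nat \<Rightarrow> nat \<Rightarrow> ereal) \<Rightarrow> ereal" where
  "conf_L J mu i b = Sup ((\<lambda>(j, k). b j k) ` {(j, k) \<in> J. mu k \<le> mu i})"

definition conf_U :: "(nat \<times> nat) set \<Rightarrow> (nat \<Rightarrow> real) \<Rightarrow> nat \<Rightarrow> (nat \<Rightarrow> nat \<Rightarrow> ereal) \<Rightarrow> ereal" where
  "conf_U J mu i b = Inf ((\<lambda>(j, k). b j k) ` {(j, k) \<in> J. mu i \<le> mu j})"

end

theory Submission
  imports Defs
begin

lemma cdf_from_deriv:
  fixes S d f :: "real \<Rightarrow> real" and p :: real
  assumes p: "0 < p"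
   and deriv: "\<And>t. 0 \<le> t \<Longrightarrow> t \<le> p \<Longrightarrow> (S has_real_derivative - d t) (at t)"
   and cont: "continuous_on {0..p} d"
   and f0: "\<And>t. t \<le> 0 \<Longrightarrow> f t = 0"
   and fd: "\<And>t. 0 < t \<Longrightarrow> t \<le> p \<Longrightarrow> f t = d t"
  shows "(LINT t:{..p}|lborel. f t) = S 0 - S p"
proof -
  have "(LINT t:{..p}|lborel. f t) = (LINT t:{0<..p}|lborel. d t)"
    unfolding set_lebesgue_integral_def
    by (intro Bochner_Integration.integral_cong refl) (auto simp: indicator_def f0 fd)
  also have "\<dots> = (LBINT t=ereal 0..ereal p. d t)"
    using interval_integral_Ioc[of 0 p d] p by simp
  also have "\<dots> = (\<lambda>t. - S t) p - (\<lambda>t. - S t) 0"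
  proof (rule interval_integral_FTC_finite)
    show "continuous_on {min 0 p..max 0 p} d" using cont p by simp
    fix x assume "min 0 p \<le> x" "x \<le> max 0 p"
    then have "((\<lambda>t. - S t) has_real_derivative - (- d x)) (at x)"
      using p by (intro derivative_intros deriv) auto
    then show "((\<lambda>t. - S t) has_vector_derivative d x) (at x within {min 0 p..max 0 p})"
      by (simp add: has_real_derivative_iff_has_vector_derivative[symmetric]
          has_field_derivative_at_within)
  qed
  finally show ?thesis by simp
qed
lemma pos_not_nonpos_Int: "0 < (g::real) \<Longrightarrow> g \<notin> \<int>\<^sub>\<le>\<^sub>0"
  by (auto elim!: nonpos_Ints_cases)

lemma poiS_deriv:
  "((\<lambda>r. \<Sum>l\<le>x. poi_pf r l) has_real_derivative - (r ^ x / fact x * exp (- r))) (at r)"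
proof (induction x)
  case 0
  show ?case unfolding poi_pf_def by (auto intro!: derivative_eq_intros)
next
  case (Suc x)
  have "((\<lambda>r. r ^ Suc x / fact (Suc x) * exp (- r)) has_real_derivative
        (r ^ x / fact x * exp (- r) - r ^ Suc x / fact (Suc x) * exp (- r))) (at r)"
  proof -
    have "((\<lambda>r. r ^ Suc x / fact (Suc x) * exp (- r)) has_real_derivative
        (real (Suc x) * r ^ x / fact (Suc x) * exp (- r) + r ^ Suc x / fact (Suc x) * (exp (- r) * (- 1)))) (at r)"
    proof -
      have d1: "((\<lambda>r. r ^ Suc x) has_real_derivative real (Suc x) * r ^ x) (at r)"
        using DERIV_pow[of "Suc x" r] by simp
      have d2: "((\<lambda>r. exp (- r)) has_real_derivative exp (- r) * (- 1)) (at r)"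
        by (auto intro!: derivative_eq_intros)
      from DERIV_mult[OF DERIV_cdivide[OF d1, of "fact (Suc x)"] d2] show ?thesis
        by (simp add: algebra_simps)
    qed
    moreover have "real (Suc x) * r ^ x / fact (Suc x) = r ^ x / fact x"
      by (simp add: fact_Suc field_simps del: of_nat_Suc)
    ultimately show ?thesis by simp
  qed
  from DERIV_add[OF Suc.IH this]
  have "((\<lambda>r. (\<Sum>l\<le>x. poi_pf r l) + r ^ Suc x / fact (Suc x) * exp (- r)) has_real_derivative
     - (r ^ x / fact x * exp (- r)) + (r ^ x / fact x * exp (- r) - r ^ Suc x / fact (Suc x) * exp (- r))) (at r)" .
  moreover have "(\<lambda>r. (\<Sum>l\<le>x. poi_pf r l) + r ^ Suc x / fact (Suc x) * exp (- r)) = (\<lambda>r. \<Sum>l\<le>Suc x. poi_pf r l)"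
    by (simp add: poi_pf_def)
  ultimately show ?case by simp
qed

lemma aux1:
  fixes K P p g D :: real
  assumes "D > 0"
  shows "- (K * p^x * P) + K / D * (D * p^x * ((1-p)*P) - p^Suc x * (g*P)) = - ((D + g) * K / D * p^Suc x * P)"
  using assms by (simp add: field_simps)

lemma nbS_deriv:
  assumes g: "0 < g" and p: "p < 1"
  shows "((\<lambda>p. \<Sum>l\<le>x. nb_pf g p l) has_real_derivative
     - (Gamma (real x + 1 + g) / (Gamma g * fact x) * p ^ x * (1 - p) powr (g - 1))) (at p)"
proof (induction x)
  case 0
  have "((\<lambda>p. (1 - p) powr g) has_real_derivative g * (1 - p) powr (g - 1) * (- 1)) (at p)"
    using p by (auto intro!: derivative_eq_intros)
  moreover have "Gamma (1 + g) = g * Gamma g" using Gamma_plus1[of g] g pos_not_nonpos_Int[of g] by (simp add: add.commute)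
  ultimately show ?case using g by (simp add: nb_pf_def Gamma_eq_zero_iff)
next
  case (Suc x)
  define c where "c = Gamma (real (Suc x) + g) / (Gamma g * fact (Suc x))"
  have "((\<lambda>p. c * p ^ Suc x * (1 - p) powr g) has_real_derivative
        c * (real (Suc x) * p ^ x * (1 - p) powr g - p ^ Suc x * (g * (1 - p) powr (g - 1)))) (at p)"
  proof -
    have d1: "((\<lambda>r. r ^ Suc x) has_real_derivative real (Suc x) * p ^ x) (at p)"
      using DERIV_pow[of "Suc x" p] by simp
    have d2: "((\<lambda>p. (1 - p) powr g) has_real_derivative g * (1 - p) powr (g - 1) * (- 1)) (at p)"
      using p by (auto intro!: derivative_eq_intros)
    from DERIV_cmult[OF DERIV_mult[OF d1 d2], of c] show ?thesis
      by (simp add: algebra_simps)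
  qed
  from DERIV_add[OF Suc.IH this]
  have *: "((\<lambda>p. (\<Sum>l\<le>x. nb_pf g p l) + c * p ^ Suc x * (1 - p) powr g) has_real_derivative
    - (Gamma (real x + 1 + g) / (Gamma g * fact x) * p ^ x * (1 - p) powr (g - 1)) +
    c * (real (Suc x) * p ^ x * (1 - p) powr g - p ^ Suc x * (g * (1 - p) powr (g - 1)))) (at p)" .
  have gx: "real x + 1 + g \<notin> \<int>\<^sub>\<le>\<^sub>0" using g by (intro pos_not_nonpos_Int) simp
  have G1: "Gamma (real x + 2 + g) = (real x + 1 + g) * Gamma (real x + 1 + g)"
    using Gamma_plus1[OF gx] by (simp add: algebra_simps)
  have pw: "(1 - p) powr g = (1 - p) * (1 - p) powr (g - 1)"
    using p by (simp add: powr_diff powr_one field_simps)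
  have Gg: "Gamma g \<noteq> 0" using g pos_not_nonpos_Int[of g] by (simp add: Gamma_eq_zero_iff)
  have "- (Gamma (real x + 1 + g) / (Gamma g * fact x) * p ^ x * (1 - p) powr (g - 1)) +
    c * (real (Suc x) * p ^ x * (1 - p) powr g - p ^ Suc x * (g * (1 - p) powr (g - 1)))
    = - (Gamma (real (Suc x) + 1 + g) / (Gamma g * fact (Suc x)) * p ^ Suc x * (1 - p) powr (g - 1))"
  proof -
    define K where "K = Gamma (real x + 1 + g) / (Gamma g * fact x)"
    have e2: "c = K / (real x + 1)"
      unfolding c_def K_def by (simp add: fact_Suc algebra_simps)
    have e3: "Gamma (real (Suc x) + 1 + g) / (Gamma g * fact (Suc x)) = (real x + 1 + g) * K / (real x + 1)"
      unfolding K_def using G1 by (simp add: fact_Suc algebra_simps)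
    show ?thesis unfolding e2 e3 pw K_def[symmetric]
      using aux1[where D="real x + 1" and K=K and p=p and P="(1 - p) powr (g - 1)" and g=g and x=x]
      by (simp add: add_ac)
  qed
  moreover have "(\<lambda>p. (\<Sum>l\<le>x. nb_pf g p l) + c * p ^ Suc x * (1 - p) powr g) = (\<lambda>p. \<Sum>l\<le>Suc x. nb_pf g p l)"
    by (simp add: nb_pf_def c_def)
  ultimately show ?case using * by simp
qed

lemma binS_deriv:
  assumes "x < m"
  shows "((\<lambda>p. \<Sum>l\<le>x. bin_pf m p l) has_real_derivative
     - (real m * real ((m - 1) choose x) * p ^ x * (1 - p) ^ (m - 1 - x))) (at p)"
  using assms
proof (induction x)
  case 0
  then obtain m' where m: "m = Suc m'" by (cases m) auto
  have "((\<lambda>p. (1 - p) ^ m) has_real_derivative real m * (1 - p) ^ (m - 1) * (- 1)) (at p)"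
    using DERIV_pow[of m "1 - p"] DERIV_chain2[of "\<lambda>y. y ^ m" _ "\<lambda>p. 1 - p" "- 1" p]
    by (auto intro!: derivative_eq_intros)
  then show ?case by (simp add: bin_pf_def)
next
  case (Suc x)
  then obtain m' where m: "m = Suc m'" by (cases m) auto
  from Suc.prems m obtain e where e: "m' = x + Suc e" by (metis Suc_less_SucD add_Suc_right less_imp_Suc_add add_Suc)
  have IH: "((\<lambda>p. \<Sum>l\<le>x. bin_pf m p l) has_real_derivative
     - (real m * real (m' choose x) * p ^ x * (1 - p) ^ (Suc e))) (at p)"
    using Suc.IH Suc.prems m e by simp
  define C where "C = real (m choose Suc x)"
  have d1: "((\<lambda>r. r ^ Suc x) has_real_derivative real (Suc x) * p ^ x) (at p)"
    using DERIV_pow[of "Suc x" p] by simp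
  have d0: "((\<lambda>p. 1 - p) has_real_derivative - 1) (at p)" by (auto intro!: derivative_eq_intros)
  have d2: "((\<lambda>p. (1 - p) ^ Suc e) has_real_derivative real (Suc e) * (1 - p) ^ e * (- 1)) (at p)"
    using DERIV_power[OF d0, of "Suc e"] by simp
  have dt: "((\<lambda>p. C * (p ^ Suc x * (1 - p) ^ Suc e)) has_real_derivative
     C * (real (Suc x) * p ^ x * (1 - p) ^ Suc e + real (Suc e) * (1 - p) ^ e * (- 1) * p ^ Suc x)) (at p)"
    by (rule DERIV_cmult[OF DERIV_mult[OF d1 d2]])
  have c1: "C * real (Suc x) = real m * real (m' choose x)"
    unfolding C_def m using Suc_times_binomial_eq[of m' x]
    by (metis of_nat_mult mult.commute)
  have c2: "C * real (Suc e) = real m * real (m' choose Suc x)"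
  proof -
    have "(m - Suc x) * (m choose Suc x) = m * ((m - 1) choose Suc x)" by (rule binomial_absorb_comp)
    moreover have "m - Suc x = Suc e" using m e by simp
    ultimately show ?thesis unfolding C_def using m by (metis of_nat_mult mult.commute diff_Suc_1)
  qed
  have tsum: "(\<lambda>p. \<Sum>l\<le>Suc x. bin_pf m p l) = (\<lambda>p. (\<Sum>l\<le>x. bin_pf m p l) + C * (p ^ Suc x * (1 - p) ^ Suc e))"
  proof
    fix p
    have "m - Suc x = Suc e" using m e by simp
    then show "(\<Sum>l\<le>Suc x. bin_pf m p l) = (\<Sum>l\<le>x. bin_pf m p l) + C * (p ^ Suc x * (1 - p) ^ Suc e)"
      by (simp add: bin_pf_def C_def mult.assoc del: power_Suc)
  qed
  have "- (real m * real (m' choose x) * p ^ x * (1 - p) ^ (Suc e)) +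
      C * (real (Suc x) * p ^ x * (1 - p) ^ Suc e + real (Suc e) * (1 - p) ^ e * (- 1) * p ^ Suc x)
    = - (C * real (Suc e) * p ^ Suc x * (1 - p) ^ e) + (C * real (Suc x) - real m * real (m' choose x)) * p ^ x * (1 - p) ^ (Suc e)"
    by (simp add: algebra_simps)
  also have "\<dots> = - (real m * real (m' choose Suc x) * p ^ Suc x * (1 - p) ^ e)"
    unfolding c1 c2 by simp
  finally have eq: "- (real m * real (m' choose x) * p ^ x * (1 - p) ^ (Suc e)) +
      C * (real (Suc x) * p ^ x * (1 - p) ^ Suc e + real (Suc e) * (1 - p) ^ e * (- 1) * p ^ Suc x)
    = - (real m * real ((m - 1) choose Suc x) * p ^ Suc x * (1 - p) ^ (m - 1 - Suc x))"
    using m e by simp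
  show ?case unfolding tsum using DERIV_add[OF IH dt] eq by simp
qed


lemma beta_cdf_nonpos: "p \<le> 0 \<Longrightarrow> beta_cdf a b p = 0"
  unfolding beta_cdf_def set_lebesgue_integral_def
  by (subst Bochner_Integration.integral_cong[where g="\<lambda>_. 0"]) (auto simp: indicator_def beta_density_def)

lemma gamma_cdf_nonpos: "p \<le> 0 \<Longrightarrow> gamma_cdf a b p = 0"
  unfolding gamma_cdf_def set_lebesgue_integral_def
  by (subst Bochner_Integration.integral_cong[where g="\<lambda>_. 0"]) (auto simp: indicator_def gamma_density_def)

lemma bin_cdf_eq:
  assumes x: "x < m" and p: "0 < p" "p < 1"
  shows "beta_cdf (real x + 1) (real m - real x) p = 1 - (\<Sum>l\<le>x. bin_pf m p l)"
proof -
  define d where "d = (\<lambda>t. real m * real ((m - 1) choose x) * t ^ x * (1 - t) ^ (m - 1 - x))"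
  have "beta_cdf (real x + 1) (real m - real x) p = (\<Sum>l\<le>x. bin_pf m 0 l) - (\<Sum>l\<le>x. bin_pf m p l)"
    unfolding beta_cdf_def
  proof (rule cdf_from_deriv[where d = d])
    show "0 < p" by fact
    show "continuous_on {0..p} d" unfolding d_def by (intro continuous_intros)
    fix t :: real
    show "t \<le> 0 \<Longrightarrow> beta_density (real x + 1) (real m - real x) t = 0" by (simp add: beta_density_def)
    show "0 \<le> t \<Longrightarrow> t \<le> p \<Longrightarrow> ((\<lambda>p. \<Sum>l\<le>x. bin_pf m p l) has_real_derivative - d t) (at t)"
      unfolding d_def by (rule binS_deriv[OF x])
    assume t: "0 < t" "t \<le> p"
    have B: "Beta (real x + 1) (real m - real x) = fact x * fact (m - 1 - x) / fact m"
    proof -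
      have "Gamma (real x + 1) = fact x" using Gamma_fact[of x] by (simp add: add.commute)
      moreover have "Gamma (real m - real x) = fact (m - 1 - x)"
        using Gamma_fact[of "m - 1 - x"] x by (simp add: of_nat_diff add.commute)
      moreover have "Gamma (real x + 1 + (real m - real x)) = fact m"
        using Gamma_fact[of m] by (simp add: add.commute)
      ultimately show ?thesis by (simp add: Beta_def)
    qed
    have C: "real m * real ((m - 1) choose x) = fact m / (fact x * fact (m - 1 - x))"
    proof -
      obtain m' where m: "m = Suc m'" using x by (cases m) auto
      show ?thesis using x unfolding m by (simp add: binomial_fact fact_Suc field_simps)
    qed
    have "beta_density (real x + 1) (real m - real x) t = t ^ x * (1 - t) ^ (m - 1 - x) / Beta (real x + 1) (real m - real x)"
    proof -
      have "(1 - t) powr (real m - real x - 1) = (1 - t) powr (real (m - 1 - x))"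
        using x by (simp add: of_nat_diff algebra_simps)
      also have "\<dots> = (1 - t) ^ (m - 1 - x)" using t p by (simp add: powr_realpow)
      finally show ?thesis using t p x by (simp add: beta_density_def powr_realpow)
    qed
    then show "beta_density (real x + 1) (real m - real x) t = d t"
      unfolding d_def B C by (simp add: field_simps)
  qed
  also have "(\<Sum>l\<le>x. bin_pf m 0 l) = 1" by (induction x) (auto simp: bin_pf_def)
  finally show ?thesis .
qed

lemma poi_cdf_eq:
  assumes r: "0 < r"
  shows "gamma_cdf (real x + 1) 1 r = 1 - (\<Sum>l\<le>x. poi_pf r l)"
proof -
  define d where "d = (\<lambda>t::real. t ^ x / fact x * exp (- t))"
  have "gamma_cdf (real x + 1) 1 r = (\<Sum>l\<le>x. poi_pf 0 l) - (\<Sum>l\<le>x. poi_pf r l)"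
    unfolding gamma_cdf_def
  proof (rule cdf_from_deriv[where d = d])
    show "0 < r" by fact
    show "continuous_on {0..r} d" unfolding d_def by (intro continuous_intros) auto
    fix t :: real
    show "t \<le> 0 \<Longrightarrow> gamma_density (real x + 1) 1 t = 0" by (simp add: gamma_density_def)
    show "0 \<le> t \<Longrightarrow> t \<le> r \<Longrightarrow> ((\<lambda>p. \<Sum>l\<le>x. poi_pf p l) has_real_derivative - d t) (at t)"
      unfolding d_def by (rule poiS_deriv)
    assume t: "0 < t" "t \<le> r"
    have "Gamma (real x + 1) = fact x" using Gamma_fact[of x] by (simp add: add.commute)
    then show "gamma_density (real x + 1) 1 t = d t"
      using t by (simp add: gamma_density_def d_def powr_realpow)
  qed
  also have "(\<Sum>l\<le>x. poi_pf 0 l) = 1"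
    by (induction x) (auto simp: poi_pf_def)
  finally show ?thesis .
qed

lemma nb_cdf_eq:
  assumes g: "0 < g" and p: "0 < p" "p < 1"
  shows "beta_cdf (real x + 1) g p = 1 - (\<Sum>l\<le>x. nb_pf g p l)"
proof -
  define d where "d = (\<lambda>t. Gamma (real x + 1 + g) / (Gamma g * fact x) * t ^ x * (1 - t) powr (g - 1))"
  have "beta_cdf (real x + 1) g p = (\<Sum>l\<le>x. nb_pf g 0 l) - (\<Sum>l\<le>x. nb_pf g p l)"
    unfolding beta_cdf_def
  proof (rule cdf_from_deriv[where d = d])
    show "0 < p" by fact
    show "continuous_on {0..p} d" unfolding d_def using p
      by (intro continuous_intros) auto
    fix t :: real
    show "t \<le> 0 \<Longrightarrow> beta_density (real x + 1) g t = 0" by (simp add: beta_density_def)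
    show "0 \<le> t \<Longrightarrow> t \<le> p \<Longrightarrow> ((\<lambda>p. \<Sum>l\<le>x. nb_pf g p l) has_real_derivative - d t) (at t)"
      unfolding d_def using p by (intro nbS_deriv g) auto
    assume t: "0 < t" "t \<le> p"
    have "Gamma (real x + 1) = fact x" using Gamma_fact[of x] by (simp add: add.commute)
    moreover have "Gamma g \<noteq> 0" "Gamma (real x + 1 + g) \<noteq> 0"
      using g pos_not_nonpos_Int[of g] pos_not_nonpos_Int[of "real x + 1 + g"] by (auto simp: Gamma_eq_zero_iff)
    ultimately show "beta_density (real x + 1) g t = d t"
      using t p by (simp add: beta_density_def d_def powr_realpow Beta_def field_simps)
  qed
  also have "(\<Sum>l\<le>x. nb_pf g 0 l) = 1"
    using g pos_not_nonpos_Int[of g] by (induction x) (auto simp: nb_pf_def Gamma_eq_zero_iff)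
  finally show ?thesis .
qed

lemma quantile_core:
  fixes S G :: "real \<Rightarrow> real" and V :: "real set" and c b :: real
  assumes V0: "V \<subseteq> {0<..}" and Vdown: "\<And>x y. x \<in> V \<Longrightarrow> 0 < y \<Longrightarrow> y \<le> x \<Longrightarrow> y \<in> V"
    and Vout: "\<And>x y. 0 < x \<Longrightarrow> x \<notin> V \<Longrightarrow> y \<in> V \<Longrightarrow> y < x"
    and cont: "continuous_on (insert 0 V) S"
    and dec: "\<And>x y. x \<in> insert 0 V \<Longrightarrow> y \<in> insert 0 V \<Longrightarrow> x < y \<Longrightarrow> S y < S x"
    and S0: "S 0 = 1" and b: "b \<in> V" "S b < c" and c: "0 < c" "c < 1"
    and G0: "\<And>x. x \<le> 0 \<Longrightarrow> G x = 0" and GS: "\<And>x. x \<in> V \<Longrightarrow> G x = 1 - S x"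
  shows "\<exists>q\<in>V. Inf {x. 1 - c \<le> G x} = q \<and> (\<forall>x\<in>V. S x \<le> c \<longleftrightarrow> q \<le> x) \<and> (\<forall>x\<in>V. c \<le> S x \<longleftrightarrow> x \<le> q)"
proof -
  have b0: "0 < b" using b V0 by auto
  have sub: "{0..b} \<subseteq> insert 0 V"
  proof
    fix y assume "y \<in> {0..b}"
    then show "y \<in> insert 0 V" using Vdown[OF b(1), of y] by (cases "y = 0") auto
  qed
  have "\<exists>x. 0 \<le> x \<and> x \<le> b \<and> S x = c"
    using b c S0 b0 by (intro IVT2' continuous_on_subset[OF cont sub]) auto
  then obtain q where q: "0 \<le> q" "q \<le> b" "S q = c" by blast
  have "q \<noteq> 0" using q S0 c by auto
  then have qV: "q \<in> V" using q Vdown[OF b(1), of q] by auto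
  have le_iff: "\<forall>x\<in>V. S x \<le> c \<longleftrightarrow> q \<le> x"
  proof
    fix x assume x: "x \<in> V"
    show "S x \<le> c \<longleftrightarrow> q \<le> x"
    proof
      assume "S x \<le> c"
      show "q \<le> x"
      proof (rule ccontr)
        assume "\<not> q \<le> x"
        then have "S q < S x" using dec[of x q] x qV by auto
        with q \<open>S x \<le> c\<close> show False by simp
      qed
    next
      assume "q \<le> x"
      then show "S x \<le> c" using dec[of q x] x qV q by (cases "q = x") auto
    qed
  qed
  have ge_iff: "\<forall>x\<in>V. c \<le> S x \<longleftrightarrow> x \<le> q"
  proof
    fix x assume x: "x \<in> V"
    show "c \<le> S x \<longleftrightarrow> x \<le> q"
    proof
      assume "c \<le> S x"
      show "x \<le> q"
      proof (rule ccontr)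
        assume "\<not> x \<le> q"
        then have "S x < S q" using dec[of q x] x qV by auto
        with q \<open>c \<le> S x\<close> show False by simp
      qed
    next
      assume "x \<le> q"
      then show "c \<le> S x" using dec[of x q] x qV q by (cases "q = x") auto
    qed
  qed
  have "Inf {x. 1 - c \<le> G x} = q"
  proof (rule cInf_eq_minimum)
    show "q \<in> {x. 1 - c \<le> G x}" using GS[OF qV] q by simp
    fix x assume "x \<in> {x. 1 - c \<le> G x}"
    then have x: "1 - c \<le> G x" by simp
    show "q \<le> x"
    proof (cases "x \<le> 0")
      case True then show ?thesis using x G0 c by simp
    next
      case False
      show ?thesis
      proof (cases "x \<in> V")
        case True then show ?thesis using le_iff x GS by auto
      next
        case False then show ?thesis using Vout[of x q] qV \<open>\<not> x \<le> 0\<close> by auto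
      qed
    qed
  qed
  then show ?thesis using qV le_iff ge_iff by blast
qed

lemma exists_below_left:
  fixes S :: "real \<Rightarrow> real"
  assumes "(S \<longlongrightarrow> 0) (at_left 1)" "0 < c"
  shows "\<exists>b\<in>{0<..<1}. S b < c"
proof -
  have "eventually (\<lambda>p. S p < c) (at_left 1)"
    using order_tendstoD(2)[OF assms(1), of c] assms(2) by simp
  moreover have "eventually (\<lambda>p. p \<in> {0<..<1}) (at_left (1::real))"
    by (rule eventually_at_left_real) simp
  ultimately have "eventually (\<lambda>p. S p < c \<and> p \<in> {0<..<1}) (at_left (1::real))"
    by (rule eventually_conj)
  from eventually_happens[OF this] show ?thesis by auto
qed

lemma exists_below_top:
  fixes S :: "real \<Rightarrow> real"
  assumes "(S \<longlongrightarrow> 0) at_top" "0 < c"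
  shows "\<exists>b>0. S b < c"
proof -
  have "eventually (\<lambda>p. S p < c) at_top"
    using order_tendstoD(2)[OF assms(1), of c] assms(2) by simp
  moreover have "eventually (\<lambda>p. p > (0::real)) at_top"
    by (rule eventually_gt_at_top)
  ultimately have "eventually (\<lambda>p. S p < c \<and> p > 0) at_top"
    by (rule eventually_conj)
  from eventually_happens[OF this] show ?thesis by auto
qed

lemma binS_props:
  assumes x: "x < m"
  shows "continuous_on UNIV (\<lambda>p. \<Sum>l\<le>x. bin_pf m p l)"
    and "\<And>a b. 0 \<le> a \<Longrightarrow> a < b \<Longrightarrow> b \<le> 1 \<Longrightarrow> (\<Sum>l\<le>x. bin_pf m b l) < (\<Sum>l\<le>x. bin_pf m a l)"
    and "(\<Sum>l\<le>x. bin_pf m 0 l) = 1"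
    and "((\<lambda>p. \<Sum>l\<le>x. bin_pf m p l) \<longlongrightarrow> 0) (at_left 1)"
proof -
  show c: "continuous_on UNIV (\<lambda>p. \<Sum>l\<le>x. bin_pf m p l)"
    unfolding bin_pf_def by (intro continuous_intros)
  fix a b :: real assume ab: "0 \<le> a" "a < b" "b \<le> 1"
  show "(\<Sum>l\<le>x. bin_pf m b l) < (\<Sum>l\<le>x. bin_pf m a l)"
  proof (rule DERIV_neg_imp_decreasing_open[OF ab(2)])
    fix t assume t: "a < t" "t < b"
    have "0 < real m * real ((m - 1) choose x) * t ^ x * (1 - t) ^ (m - 1 - x)"
      using t ab x by (intro mult_pos_pos) auto
    then show "\<exists>y. ((\<lambda>p. \<Sum>l\<le>x. bin_pf m p l) has_real_derivative y) (at t) \<and> y < 0"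
      using binS_deriv[OF x, of t] by (intro exI[of _ "- (real m * real ((m - 1) choose x) * t ^ x * (1 - t) ^ (m - 1 - x))"]) auto
  next
    show "continuous_on {a..b} (\<lambda>p. \<Sum>l\<le>x. bin_pf m p l)"
      by (rule continuous_on_subset[OF c]) auto
  qed
next
  show "(\<Sum>l\<le>x. bin_pf m 0 l) = 1" by (induction x) (auto simp: bin_pf_def)
next
  have "(\<Sum>l\<le>x. bin_pf m 1 l) = 0"
    using x by (intro sum.neutral) (auto simp: bin_pf_def)
  moreover have "isCont (\<lambda>p. \<Sum>l\<le>x. bin_pf m p l) 1"
    unfolding bin_pf_def by (intro continuous_intros)
  ultimately show "((\<lambda>p. \<Sum>l\<le>x. bin_pf m p l) \<longlongrightarrow> 0) (at_left 1)"
    by (metis filterlim_at_split isCont_def)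
qed

lemma poiS_props:
  shows "continuous_on UNIV (\<lambda>r. \<Sum>l\<le>x. poi_pf r l)"
    and "\<And>a b. 0 \<le> a \<Longrightarrow> a < b \<Longrightarrow> (\<Sum>l\<le>x. poi_pf b l) < (\<Sum>l\<le>x. poi_pf a l)"
    and "(\<Sum>l\<le>x. poi_pf 0 l) = 1"
    and "((\<lambda>r. \<Sum>l\<le>x. poi_pf r l) \<longlongrightarrow> 0) at_top"
proof -
  show c: "continuous_on UNIV (\<lambda>r. \<Sum>l\<le>x. poi_pf r l)"
    unfolding poi_pf_def by (intro continuous_intros) auto
  fix a b :: real assume ab: "0 \<le> a" "a < b"
  show "(\<Sum>l\<le>x. poi_pf b l) < (\<Sum>l\<le>x. poi_pf a l)"
  proof (rule DERIV_neg_imp_decreasing_open[OF ab(2)])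
    fix t assume t: "a < t" "t < b"
    have "0 < t ^ x / fact x * exp (- t)"
      using t ab by (intro mult_pos_pos divide_pos_pos) auto
    then show "\<exists>y. ((\<lambda>p. \<Sum>l\<le>x. poi_pf p l) has_real_derivative y) (at t) \<and> y < 0"
      using poiS_deriv[of x t] by (intro exI[of _ "- (t ^ x / fact x * exp (- t))"]) auto
  next
    show "continuous_on {a..b} (\<lambda>p. \<Sum>l\<le>x. poi_pf p l)"
      by (rule continuous_on_subset[OF c]) auto
  qed
next
  show "(\<Sum>l\<le>x. poi_pf 0 l) = 1" by (induction x) (auto simp: poi_pf_def)
next
  show "((\<lambda>r. \<Sum>l\<le>x. poi_pf r l) \<longlongrightarrow> 0) at_top"
  proof (rule tendsto_null_sum)
    fix l
    have "((\<lambda>r::real. (r ^ l / exp r) / fact l) \<longlongrightarrow> 0) at_top"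
      by (rule tendsto_divide_zero) (rule tendsto_power_div_exp_0)
    then show "((\<lambda>r. poi_pf r l) \<longlongrightarrow> 0) at_top"
      by (simp add: poi_pf_def exp_minus field_simps)
  qed
qed

lemma nbS_props:
  assumes g: "0 < g"
  shows "continuous_on {..<1} (\<lambda>p. \<Sum>l\<le>x. nb_pf g p l)"
    and "\<And>a b. 0 \<le> a \<Longrightarrow> a < b \<Longrightarrow> b < 1 \<Longrightarrow> (\<Sum>l\<le>x. nb_pf g b l) < (\<Sum>l\<le>x. nb_pf g a l)"
    and "(\<Sum>l\<le>x. nb_pf g 0 l) = 1"
    and "((\<lambda>p. \<Sum>l\<le>x. nb_pf g p l) \<longlongrightarrow> 0) (at_left 1)"
proof -
  have Gg: "Gamma g \<noteq> 0" using g pos_not_nonpos_Int[of g] by (simp add: Gamma_eq_zero_iff)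
  show c: "continuous_on {..<1} (\<lambda>p. \<Sum>l\<le>x. nb_pf g p l)"
    unfolding nb_pf_def by (intro continuous_intros) auto
  fix a b :: real assume ab: "0 \<le> a" "a < b" "b < 1"
  show "(\<Sum>l\<le>x. nb_pf g b l) < (\<Sum>l\<le>x. nb_pf g a l)"
  proof (rule DERIV_neg_imp_decreasing_open[OF ab(2)])
    fix t assume t: "a < t" "t < b"
    have "Gamma (real x + 1 + g) > 0" "Gamma g > 0" using g by (auto intro!: Gamma_real_pos)
    then have "0 < Gamma (real x + 1 + g) / (Gamma g * fact x) * t ^ x * (1 - t) powr (g - 1)"
      using t ab by (intro mult_pos_pos divide_pos_pos) auto
    then show "\<exists>y. ((\<lambda>p. \<Sum>l\<le>x. nb_pf g p l) has_real_derivative y) (at t) \<and> y < 0"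
      using nbS_deriv[OF g, of t x] t ab by (intro exI[of _ "- (Gamma (real x + 1 + g) / (Gamma g * fact x) * t ^ x * (1 - t) powr (g - 1))"]) auto
  next
    show "continuous_on {a..b} (\<lambda>p. \<Sum>l\<le>x. nb_pf g p l)"
      by (rule continuous_on_subset[OF c]) (use ab in auto)
  qed
next
  have Gg: "Gamma g \<noteq> 0" using g pos_not_nonpos_Int[of g] by (simp add: Gamma_eq_zero_iff)
  show "(\<Sum>l\<le>x. nb_pf g 0 l) = 1"
    using Gg by (induction x) (auto simp: nb_pf_def)
next
  show "((\<lambda>p. \<Sum>l\<le>x. nb_pf g p l) \<longlongrightarrow> 0) (at_left 1)"
  proof (rule tendsto_null_sum)
    fix l
    have "((\<lambda>p. 1 - p) \<longlongrightarrow> 0) (at_left (1::real))"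
      by (rule tendsto_eq_intros | simp)+
    then have "((\<lambda>p. (1 - p) powr g) \<longlongrightarrow> 0) (at_left (1::real))"
      using g by (intro tendsto_zero_powrI tendsto_const)
        (auto simp: eventually_at_left_real intro!: eventually_mono[OF eventually_at_left_real[of 0 1]])
    then have "((\<lambda>p. Gamma (real l + g) / (Gamma g * fact l) * p ^ l * (1 - p) powr g) \<longlongrightarrow>
        Gamma (real l + g) / (Gamma g * fact l) * 1 ^ l * 0) (at_left (1::real))"
      by (intro tendsto_mult tendsto_const tendsto_power tendsto_ident_at)
    then show "((\<lambda>p. nb_pf g p l) \<longlongrightarrow> 0) (at_left 1)"
      by (simp add: nb_pf_def)
  qed
qed

lemma edf_cdf_nat:
  assumes "0 < phi" "0 < V"
  shows "edf_cdf fam phi V mu (phi * real X / V) = (\<Sum>l\<le>X. fam phi V mu l)"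
proof -
  have iff: "\<And>l. phi * real l / V \<le> phi * real X / V \<longleftrightarrow> l \<le> X"
    using assms by (simp add: divide_le_cancel mult_le_cancel_left_pos)
  show ?thesis unfolding edf_cdf_def iff
    by (subst suminf_finite[of "{..X}"]) auto
qed

lemma edf_cdf_strict_nat:
  assumes "0 < phi" "0 < V"
  shows "edf_cdf_strict fam phi V mu (phi * real X / V) = (\<Sum>l<X. fam phi V mu l)"
proof -
  have iff: "\<And>l. phi * real l / V < phi * real X / V \<longleftrightarrow> l < X"
    using assms by (simp add: divide_less_cancel mult_less_cancel_left_pos)
  show ?thesis unfolding edf_cdf_strict_def iff
    by (subst suminf_finite[of "{..<X}"]) auto
qed

lemma ereal_Inf_min: "a \<in> A \<Longrightarrow> (\<And>x. x \<in> A \<Longrightarrow> a \<le> x) \<Longrightarrow> Inf (ereal ` A) = ereal a"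
  by (rule cInf_eq_minimum) auto

lemma ereal_Sup_max: "a \<in> A \<Longrightarrow> (\<And>x. x \<in> A \<Longrightarrow> x \<le> a) \<Longrightarrow> Sup (ereal ` A) = ereal a"
  by (rule cSup_eq_maximum) auto

lemma Inf_ereal_Ioo: "Inf (ereal ` {0<..<1}) = 0"
proof (rule Inf_eqI)
  show "\<And>i. i \<in> ereal ` {0<..<1} \<Longrightarrow> 0 \<le> i" by auto
  fix y assume y: "\<And>i. i \<in> ereal ` {0<..<1} \<Longrightarrow> y \<le> i"
  show "y \<le> 0"
  proof (rule ccontr)
    assume "\<not> y \<le> 0"
    have "y \<le> ereal (1/2)" using y[OF imageI, of "1/2"] by simp
    then obtain r where r: "y = ereal r" using \<open>\<not> y \<le> 0\<close> by (cases y) auto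
    then have "r > 0" "r \<le> 1/2" using \<open>\<not> y \<le> 0\<close> \<open>y \<le> ereal (1/2)\<close> by auto
    then have "y \<le> ereal (r/2)" using y[OF imageI, of "r/2"] by simp
    then show False using r \<open>r > 0\<close> by simp
  qed
qed

lemma Inf_ereal_Ioi: "Inf (ereal ` {0<..}) = 0"
proof (rule Inf_eqI)
  show "\<And>i. i \<in> ereal ` {0<..} \<Longrightarrow> 0 \<le> i" by auto
  fix y assume y: "\<And>i. i \<in> ereal ` {0<..} \<Longrightarrow> y \<le> i"
  show "y \<le> 0"
  proof (rule ccontr)
    assume "\<not> y \<le> 0"
    have "y \<le> ereal 1" using y[of "ereal 1"] by auto
    then obtain r where r: "y = ereal r" using \<open>\<not> y \<le> 0\<close> by (cases y) auto
    then have "r > 0" using \<open>\<not> y \<le> 0\<close> by auto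
    then have "y \<le> ereal (r/2)" using y[OF imageI, of "r/2"] by simp
    then show False using r \<open>r > 0\<close> by simp
  qed
qed

lemma Sup_ereal_Ioo: "Sup (ereal ` {0<..<1}) = 1"
proof (rule Sup_eqI)
  show "\<And>i. i \<in> ereal ` {0<..<1} \<Longrightarrow> i \<le> 1" by auto
  fix y assume y: "\<And>i. i \<in> ereal ` {0<..<1} \<Longrightarrow> i \<le> y"
  show "1 \<le> y"
  proof (rule ccontr)
    assume "\<not> 1 \<le> y"
    have "ereal (1/2) \<le> y" using y[OF imageI, of "1/2"] by simp
    then obtain r where r: "y = ereal r" using \<open>\<not> 1 \<le> y\<close> by (cases y) auto
    then have "r < 1" "1/2 \<le> r" using \<open>\<not> 1 \<le> y\<close> \<open>ereal (1/2) \<le> y\<close> by auto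
    then have "ereal ((r + 1)/2) \<le> y" using y[OF imageI, of "(r+1)/2"] by simp
    then show False using r \<open>r < 1\<close> by simp
  qed
qed

lemma l_delta_min:
  assumes "{mu\<in>Theta. edf_cdf_strict fam phi V mu y \<le> 1 - delta} = {mu\<in>Theta. a \<le> mu}" "a \<in> Theta"
  shows "l_delta fam Theta delta y V phi = ereal a"
  unfolding l_delta_def Let_def assms(1) using assms(2)
  by (subst if_not_P) (auto intro!: ereal_Inf_min)

lemma l_delta_all:
  assumes "\<And>mu. mu \<in> Theta \<Longrightarrow> edf_cdf_strict fam phi V mu y \<le> 1 - delta" "Theta \<noteq> {}"
  shows "l_delta fam Theta delta y V phi = Inf (ereal ` Theta)"
proof -
  have "{mu\<in>Theta. edf_cdf_strict fam phi V mu y \<le> 1 - delta} = Theta" using assms(1) by auto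
  then show ?thesis unfolding l_delta_def Let_def using assms(2) by simp
qed

lemma u_delta_max:
  assumes "{mu\<in>Theta. delta \<le> edf_cdf fam phi V mu y} = {mu\<in>Theta. mu \<le> a}" "a \<in> Theta"
  shows "u_delta fam Theta delta y V phi = ereal a"
  unfolding u_delta_def Let_def assms(1) using assms(2)
  by (subst if_not_P) (auto intro!: ereal_Sup_max)

lemma u_delta_all:
  assumes "\<And>mu. mu \<in> Theta \<Longrightarrow> delta \<le> edf_cdf fam phi V mu y" "Theta \<noteq> {}"
  shows "u_delta fam Theta delta y V phi = Sup (ereal ` Theta)"
proof -
  have "{mu\<in>Theta. delta \<le> edf_cdf fam phi V mu y} = Theta" using assms(1) by auto
  then show ?thesis unfolding u_delta_def Let_def using assms(2) by simp
qed

lemma bin_quant: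
  assumes x: "x < m" and c: "0 < c" "c < 1"
  shows "\<exists>q\<in>{0<..<1}. Inf {t. 1 - c \<le> beta_cdf (real x + 1) (real m - real x) t} = q \<and>
     (\<forall>t\<in>{0<..<1}. (\<Sum>l\<le>x. bin_pf m t l) \<le> c \<longleftrightarrow> q \<le> t) \<and>
     (\<forall>t\<in>{0<..<1}. c \<le> (\<Sum>l\<le>x. bin_pf m t l) \<longleftrightarrow> t \<le> q)"
proof -
  note P = binS_props[OF x]
  obtain b where b: "b \<in> {0<..<1}" "(\<Sum>l\<le>x. bin_pf m b l) < c"
    using exists_below_left[OF P(4) c(1)] by blast
  show ?thesis
  proof (rule quantile_core[where b = b])
    show "continuous_on (insert 0 {0<..<1}) (\<lambda>t. \<Sum>l\<le>x. bin_pf m t l)"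
      by (rule continuous_on_subset[OF P(1)]) auto
    show "\<And>s t. s \<in> insert 0 {0<..<1} \<Longrightarrow> t \<in> insert 0 {0<..<1} \<Longrightarrow> s < t \<Longrightarrow>
      (\<Sum>l\<le>x. bin_pf m t l) < (\<Sum>l\<le>x. bin_pf m s l)"
      using P(2) by auto
  next
    fix t assume "t \<in> {0<..<1::real}"
    then show "beta_cdf (real x + 1) (real m - real x) t = 1 - (\<Sum>l\<le>x. bin_pf m t l)"
      by (intro bin_cdf_eq x) auto
  qed (use b c P(3) beta_cdf_nonpos in auto)
qed

lemma poi_quant:
  assumes c: "0 < c" "c < 1"
  shows "\<exists>q\<in>{0<..}. Inf {t. 1 - c \<le> gamma_cdf (real x + 1) 1 t} = q \<and>
     (\<forall>t\<in>{0<..}. (\<Sum>l\<le>x. poi_pf t l) \<le> c \<longleftrightarrow> q \<le> t) \<and>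
     (\<forall>t\<in>{0<..}. c \<le> (\<Sum>l\<le>x. poi_pf t l) \<longleftrightarrow> t \<le> q)"
proof -
  note P = poiS_props[where x=x]
  obtain b where b: "b > 0" "(\<Sum>l\<le>x. poi_pf b l) < c"
    using exists_below_top[OF P(4) c(1)] by blast
  show ?thesis
  proof (rule quantile_core[where b = b])
    show "continuous_on (insert 0 {0<..}) (\<lambda>t. \<Sum>l\<le>x. poi_pf t l)"
      by (rule continuous_on_subset[OF P(1)]) auto
    show "\<And>s t. s \<in> insert 0 {0<..} \<Longrightarrow> t \<in> insert 0 {0<..} \<Longrightarrow> s < t \<Longrightarrow>
      (\<Sum>l\<le>x. poi_pf t l) < (\<Sum>l\<le>x. poi_pf s l)"
      using P(2) by auto
  next
    fix t assume "t \<in> {(0::real)<..}"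
    then show "gamma_cdf (real x + 1) 1 t = 1 - (\<Sum>l\<le>x. poi_pf t l)"
      by (intro poi_cdf_eq) auto
  qed (use b c P(3) gamma_cdf_nonpos in auto)
qed

lemma nb_quant:
  assumes g: "0 < g" and c: "0 < c" "c < 1"
  shows "\<exists>q\<in>{0<..<1}. Inf {t. 1 - c \<le> beta_cdf (real x + 1) g t} = q \<and>
     (\<forall>t\<in>{0<..<1}. (\<Sum>l\<le>x. nb_pf g t l) \<le> c \<longleftrightarrow> q \<le> t) \<and>
     (\<forall>t\<in>{0<..<1}. c \<le> (\<Sum>l\<le>x. nb_pf g t l) \<longleftrightarrow> t \<le> q)"
proof -
  note P = nbS_props[OF g, where x=x]
  obtain b where b: "b \<in> {0<..<1}" "(\<Sum>l\<le>x. nb_pf g b l) < c"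
    using exists_below_left[OF P(4) c(1)] by blast
  show ?thesis
  proof (rule quantile_core[where b = b])
    show "continuous_on (insert 0 {0<..<1}) (\<lambda>t. \<Sum>l\<le>x. nb_pf g t l)"
      by (rule continuous_on_subset[OF P(1)]) auto
    show "\<And>s t. s \<in> insert 0 {0<..<1} \<Longrightarrow> t \<in> insert 0 {0<..<1} \<Longrightarrow> s < t \<Longrightarrow>
      (\<Sum>l\<le>x. nb_pf g t l) < (\<Sum>l\<le>x. nb_pf g s l)"
      using P(2) by auto
  next
    fix t assume "t \<in> {0<..<1::real}"
    then show "beta_cdf (real x + 1) g t = 1 - (\<Sum>l\<le>x. nb_pf g t l)"
      by (intro nb_cdf_eq g) auto
  qed (use b c P(3) beta_cdf_nonpos in auto)
qed

lemma bin_L: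
  assumes phi: "0 < phi" and V: "0 < V" and m: "V / phi = real m" and X: "X \<le> m"
    and y: "y = phi * real X / V" and d: "0 < delta" "delta < 1"
  shows "l_delta bin_fam {0<..<1} delta y V phi =
    ereal (q_B delta (V * y / phi) (1 + V / phi - V * y / phi) * of_bool (y > 0))"
proof -
  have fam: "\<And>mu. bin_fam phi V mu = bin_pf m mu" by (simp add: bin_fam_def m)
  have Vy: "V * y / phi = real X" using y phi V by (simp add: field_simps)
  have strict: "\<And>mu. edf_cdf_strict bin_fam phi V mu y = (\<Sum>l<X. bin_pf m mu l)"
    unfolding y using edf_cdf_strict_nat[OF phi V] fam by simp
  show ?thesis
  proof (cases X)
    case 0
    then have "y = 0" using y by simp
    have "l_delta bin_fam {0<..<1} delta y V phi = Inf (ereal ` {0<..<1})"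
      by (rule l_delta_all) (use d in \<open>auto simp: strict 0\<close>)
    then show ?thesis using \<open>y = 0\<close> Inf_ereal_Ioo by (simp add: zero_ereal_def)
  next
    case (Suc x)
    have x: "x < m" using X Suc by simp
    obtain q where q: "q \<in> {0<..<1}" "Inf {t. 1 - (1 - delta) \<le> beta_cdf (real x + 1) (real m - real x) t} = q"
      "\<forall>t\<in>{0<..<1}. (\<Sum>l\<le>x. bin_pf m t l) \<le> 1 - delta \<longleftrightarrow> q \<le> t"
      using bin_quant[OF x, of "1 - delta"] d by auto
    have "l_delta bin_fam {0<..<1} delta y V phi = ereal q"
      by (rule l_delta_min) (use q in \<open>auto simp: strict Suc lessThan_Suc_atMost\<close>)
    moreover have "y > 0" using y Suc phi V by simp
    moreover have "q_B delta (V * y / phi) (1 + V / phi - V * y / phi) = q"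
      unfolding Vy m q_B_def using q(2) Suc by (simp add: algebra_simps)
    ultimately show ?thesis by simp
  qed
qed

lemma bin_U:
  assumes phi: "0 < phi" and V: "0 < V" and m: "V / phi = real m" and X: "X \<le> m"
    and y: "y = phi * real X / V" and d: "0 < delta" "delta < 1"
  shows "u_delta bin_fam {0<..<1} delta y V phi =
    ereal (q_B (1 - delta) (1 + V * y / phi) (V / phi - V * y / phi) * of_bool (y < 1) + of_bool (y = 1))"
proof -
  have fam: "\<And>mu. bin_fam phi V mu = bin_pf m mu" by (simp add: bin_fam_def m)
  have Vy: "V * y / phi = real X" using y phi V by (simp add: field_simps)
  have cdf: "\<And>mu. edf_cdf bin_fam phi V mu y = (\<Sum>l\<le>X. bin_pf m mu l)"
    unfolding y using edf_cdf_nat[OF phi V] fam by simp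
  show ?thesis
  proof (cases "X = m")
    case True
    have "V / phi > 0" using phi V by simp
    then have "m \<noteq> 0" using m by (intro notI) simp
    then have "y = 1" using y m phi V True by (simp add: field_simps)
    have one: "\<And>mu. (\<Sum>l\<le>m. bin_pf m mu l) = 1"
      unfolding bin_pf_def using binomial_ring[of "mu" "1 - mu" m for mu :: real]
      by (simp add: mult.assoc)
    have "u_delta bin_fam {0<..<1} delta y V phi = Sup (ereal ` {0<..<1})"
      by (rule u_delta_all) (use d in \<open>auto simp: cdf True one\<close>)
    then show ?thesis using \<open>y = 1\<close> Sup_ereal_Ioo by (simp add: one_ereal_def)
  next
    case False
    then have x: "X < m" using X by simp
    obtain q where q: "q \<in> {0<..<1}" "Inf {t. 1 - delta \<le> beta_cdf (real X + 1) (real m - real X) t} = q"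
      "\<forall>t\<in>{0<..<1}. delta \<le> (\<Sum>l\<le>X. bin_pf m t l) \<longleftrightarrow> t \<le> q"
      using bin_quant[OF x, of delta] d by auto
    have "u_delta bin_fam {0<..<1} delta y V phi = ereal q"
      by (rule u_delta_max) (use q in \<open>auto simp: cdf\<close>)
    moreover have "y < 1"
    proof -
      have m0: "real m > 0" using x by simp
      have "y = real X / real m" using y m phi V m0 by (simp add: field_simps)
      then show ?thesis using x m0 by simp
    qed
    moreover have "q_B (1 - delta) (1 + V * y / phi) (V / phi - V * y / phi) = q"
      unfolding Vy m q_B_def using q(2) by (simp add: algebra_simps)
    ultimately show ?thesis by simp
  qed
qed

lemma poi_L:
  assumes phi: "0 < phi" and V: "0 < V"
    and y: "y = phi * real X / V" and d: "0 < delta" "delta < 1"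
  shows "l_delta poi_fam {0<..} delta y V phi =
    ereal (phi * q_Gamma delta (V * y / phi) 1 / V * of_bool (y > 0))"
proof -
  have Vy: "V * y / phi = real X" using y phi V by (simp add: field_simps)
  have strict: "\<And>mu. edf_cdf_strict poi_fam phi V mu y = (\<Sum>l<X. poi_pf (mu * V / phi) l)"
    unfolding y using edf_cdf_strict_nat[OF phi V] by (simp add: poi_fam_def)
  show ?thesis
  proof (cases X)
    case 0
    then have "y = 0" using y by simp
    have "l_delta poi_fam {0<..} delta y V phi = Inf (ereal ` {0<..})"
      by (rule l_delta_all) (use d in \<open>auto simp: strict 0\<close>)
    then show ?thesis using \<open>y = 0\<close> Inf_ereal_Ioi by (simp add: zero_ereal_def)
  next
    case (Suc x)
    obtain q where q: "q \<in> {0<..}" "Inf {t. 1 - (1 - delta) \<le> gamma_cdf (real x + 1) 1 t} = q"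
      "\<forall>t\<in>{0<..}. (\<Sum>l\<le>x. poi_pf t l) \<le> 1 - delta \<longleftrightarrow> q \<le> t"
      using poi_quant[of "1 - delta" x] d by auto
    have pos: "\<And>mu. 0 < mu \<Longrightarrow> 0 < mu * V / phi" using phi V by simp
    have iff: "\<And>mu. 0 < mu \<Longrightarrow> q \<le> mu * V / phi \<longleftrightarrow> phi * q / V \<le> mu"
      using phi V by (simp add: field_simps)
    have "l_delta poi_fam {0<..} delta y V phi = ereal (phi * q / V)"
    proof (rule l_delta_min)
      show "phi * q / V \<in> {0<..}" using q phi V by simp
      show "{mu \<in> {0<..}. edf_cdf_strict poi_fam phi V mu y \<le> 1 - delta} = {mu \<in> {0<..}. phi * q / V \<le> mu}"
        using q(3) pos iff by (auto simp: strict Suc lessThan_Suc_atMost)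
    qed
    moreover have "y > 0" using y Suc phi V by simp
    moreover have "q_Gamma delta (V * y / phi) 1 = q"
      unfolding Vy q_Gamma_def using q(2) Suc by (simp add: algebra_simps)
    ultimately show ?thesis by simp
  qed
qed

lemma poi_U:
  assumes phi: "0 < phi" and V: "0 < V"
    and y: "y = phi * real X / V" and d: "0 < delta" "delta < 1"
  shows "u_delta poi_fam {0<..} delta y V phi =
    ereal (phi * q_Gamma (1 - delta) (1 + V * y / phi) 1 / V)"
proof -
  have Vy: "V * y / phi = real X" using y phi V by (simp add: field_simps)
  have cdf: "\<And>mu. edf_cdf poi_fam phi V mu y = (\<Sum>l\<le>X. poi_pf (mu * V / phi) l)"
    unfolding y using edf_cdf_nat[OF phi V] by (simp add: poi_fam_def)
  obtain q where q: "q \<in> {0<..}" "Inf {t. 1 - delta \<le> gamma_cdf (real X + 1) 1 t} = q"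
    "\<forall>t\<in>{0<..}. delta \<le> (\<Sum>l\<le>X. poi_pf t l) \<longleftrightarrow> t \<le> q"
    using poi_quant[of delta X] d by auto
  have pos: "\<And>mu. 0 < mu \<Longrightarrow> 0 < mu * V / phi" using phi V by simp
  have iff: "\<And>mu. 0 < mu \<Longrightarrow> mu * V / phi \<le> q \<longleftrightarrow> mu \<le> phi * q / V"
    using phi V by (simp add: field_simps)
  have "u_delta poi_fam {0<..} delta y V phi = ereal (phi * q / V)"
  proof (rule u_delta_max)
    show "phi * q / V \<in> {0<..}" using q phi V by simp
    show "{mu \<in> {0<..}. delta \<le> edf_cdf poi_fam phi V mu y} = {mu \<in> {0<..}. mu \<le> phi * q / V}"
      using q(3) pos iff by (auto simp: cdf)
  qed
  moreover have "q_Gamma (1 - delta) (1 + V * y / phi) 1 = q"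
    unfolding Vy q_Gamma_def using q(2) by (simp add: algebra_simps)
  ultimately show ?thesis by simp
qed

lemma nb_L:
  assumes phi: "0 < phi" and V: "0 < V"
    and y: "y = phi * real X / V" and d: "0 < delta" "delta < 1"
  shows "l_delta nb_fam {0<..} delta y V phi =
    ereal (q_B delta (V * y / phi) (V / phi) / (1 - q_B delta (V * y / phi) (V / phi)) * of_bool (y > 0))"
proof -
  have g: "0 < V / phi" using phi V by simp
  have Vy: "V * y / phi = real X" using y phi V by (simp add: field_simps)
  have strict: "\<And>mu. edf_cdf_strict nb_fam phi V mu y = (\<Sum>l<X. nb_pf (V / phi) (mu / (1 + mu)) l)"
    unfolding y using edf_cdf_strict_nat[OF phi V] by (simp add: nb_fam_def)
  show ?thesis
  proof (cases X)
    case 0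
    then have "y = 0" using y by simp
    have "l_delta nb_fam {0<..} delta y V phi = Inf (ereal ` {0<..})"
      by (rule l_delta_all) (use d in \<open>auto simp: strict 0\<close>)
    then show ?thesis using \<open>y = 0\<close> Inf_ereal_Ioi by (simp add: zero_ereal_def)
  next
    case (Suc x)
    obtain q where q: "q \<in> {0<..<1}" "Inf {t. 1 - (1 - delta) \<le> beta_cdf (real x + 1) (V / phi) t} = q"
      "\<forall>t\<in>{0<..<1}. (\<Sum>l\<le>x. nb_pf (V / phi) t l) \<le> 1 - delta \<longleftrightarrow> q \<le> t"
      using nb_quant[OF g, of "1 - delta" x] d by auto
    have pos: "\<And>mu::real. 0 < mu \<Longrightarrow> mu / (1 + mu) \<in> {0<..<1}"
    proof -
      fix mu :: real assume "0 < mu"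
      then show "mu / (1 + mu) \<in> {0<..<1}" by (simp add: divide_less_eq)
    qed
    have iff: "\<And>mu. 0 < mu \<Longrightarrow> q \<le> mu / (1 + mu) \<longleftrightarrow> q / (1 - q) \<le> mu"
      using q(1) by (simp add: field_simps)
    have "l_delta nb_fam {0<..} delta y V phi = ereal (q / (1 - q))"
    proof (rule l_delta_min)
      show "q / (1 - q) \<in> {0<..}" using q by simp
      show "{mu \<in> {0<..}. edf_cdf_strict nb_fam phi V mu y \<le> 1 - delta} = {mu \<in> {0<..}. q / (1 - q) \<le> mu}"
        using q(3) pos iff by (auto simp: strict Suc lessThan_Suc_atMost)
    qed
    moreover have "y > 0" using y Suc phi V by simp
    moreover have "q_B delta (V * y / phi) (V / phi) = q"
      unfolding Vy q_B_def using q(2) Suc by (simp add: algebra_simps)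
    ultimately show ?thesis by simp
  qed
qed

lemma nb_U:
  assumes phi: "0 < phi" and V: "0 < V"
    and y: "y = phi * real X / V" and d: "0 < delta" "delta < 1"
  shows "u_delta nb_fam {0<..} delta y V phi =
    ereal (q_B (1 - delta) (1 + V * y / phi) (V / phi) / (1 - q_B (1 - delta) (1 + V * y / phi) (V / phi)))"
proof -
  have g: "0 < V / phi" using phi V by simp
  have Vy: "V * y / phi = real X" using y phi V by (simp add: field_simps)
  have cdf: "\<And>mu. edf_cdf nb_fam phi V mu y = (\<Sum>l\<le>X. nb_pf (V / phi) (mu / (1 + mu)) l)"
    unfolding y using edf_cdf_nat[OF phi V] by (simp add: nb_fam_def)
  obtain q where q: "q \<in> {0<..<1}" "Inf {t. 1 - delta \<le> beta_cdf (real X + 1) (V / phi) t} = q"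
    "\<forall>t\<in>{0<..<1}. delta \<le> (\<Sum>l\<le>X. nb_pf (V / phi) t l) \<longleftrightarrow> t \<le> q"
    using nb_quant[OF g, of delta X] d by auto
  have pos: "\<And>mu::real. 0 < mu \<Longrightarrow> mu / (1 + mu) \<in> {0<..<1}"
    proof -
      fix mu :: real assume "0 < mu"
      then show "mu / (1 + mu) \<in> {0<..<1}" by (simp add: divide_less_eq)
    qed
  have iff: "\<And>mu. 0 < mu \<Longrightarrow> mu / (1 + mu) \<le> q \<longleftrightarrow> mu \<le> q / (1 - q)"
    using q(1) by (simp add: field_simps)
  have "u_delta nb_fam {0<..} delta y V phi = ereal (q / (1 - q))"
  proof (rule u_delta_max)
    show "q / (1 - q) \<in> {0<..}" using q by simp
    show "{mu \<in> {0<..}. delta \<le> edf_cdf nb_fam phi V mu y} = {mu \<in> {0<..}. mu \<le> q / (1 - q)}"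
      using q(3) pos iff by (auto simp: cdf)
  qed
  moreover have "q_B (1 - delta) (1 + V * y / phi) (V / phi) = q"
    unfolding Vy q_B_def using q(2) by (simp add: algebra_simps)
  ultimately show ?thesis by simp
qed

lemma tri_swap:
  fixes f :: "nat \<Rightarrow> nat \<Rightarrow> real"
  shows "(\<Sum>l\<le>x. \<Sum>r\<le>x - l. f l r) = (\<Sum>r\<le>x. \<Sum>l\<le>x - r. f l r)"
proof -
  have e1: "\<And>l. l \<in> {..x} \<Longrightarrow> {..x - l} = {r \<in> {..x}. l + r \<le> x}" by auto
  have e2: "\<And>r. r \<in> {..x} \<Longrightarrow> {..x - r} = {l \<in> {..x}. l + r \<le> x}" by auto
  have "(\<Sum>l\<le>x. \<Sum>r\<le>x - l. f l r) = (\<Sum>l\<in>{..x}. \<Sum>r\<in>{r \<in> {..x}. l + r \<le> x}. f l r)"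
    using e1 by (intro sum.cong) auto
  also have "\<dots> = (\<Sum>r\<in>{..x}. \<Sum>l\<in>{l \<in> {..x}. l + r \<le> x}. f l r)"
    by (rule sum.swap_restrict) auto
  also have "\<dots> = (\<Sum>r\<le>x. \<Sum>l\<le>x - r. f l r)"
    using e2 by (intro sum.cong) auto
  finally show ?thesis .
qed

lemma tri_conv:
  fixes g :: "nat \<Rightarrow> nat \<Rightarrow> real"
  shows "(\<Sum>r\<le>x. \<Sum>l\<le>x - r. g r l) = (\<Sum>s\<le>x. \<Sum>r\<le>s. g r (s - r))"
proof -
  have "(\<Sum>r\<le>x. \<Sum>l\<le>x - r. g r l) = (\<Sum>(r, l)\<in>(SIGMA r:{..x}. {..x - r}). g r l)"
    by (rule sum.Sigma) auto
  also have "(SIGMA r:{..x}. {..x - r}) = {(i, j). i + j \<le> x}" by auto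
  also have "(\<Sum>(r, l)\<in>{(i, j). i + j \<le> x}. g r l) = (\<Sum>s\<le>x. \<Sum>r\<le>s. g r (s - r))"
    by (rule sum.triangle_reindex_eq)
  finally show ?thesis .
qed

context prob_space
begin

lemma PiM_nat_sets:
  assumes B: "finite B" and A: "A \<subseteq> space (PiM B (\<lambda>_. count_space (UNIV::nat set)))"
  shows "A \<in> sets (PiM B (\<lambda>_. count_space UNIV))"
proof -
  have sp: "space (PiM B (\<lambda>_. count_space (UNIV::nat set))) = PiE B (\<lambda>_. UNIV)" by (simp add: space_PiM)
  have "A = (\<Union>c\<in>A. PiE B (\<lambda>i. {c i}))"
  proof (intro equalityI subsetI)
    fix c assume "c \<in> A"
    then have "c \<in> extensional B" using A sp by (auto simp: PiE_def)
    then have "c \<in> PiE B (\<lambda>i. {c i})" by (simp add: PiE_singleton)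
    then show "c \<in> (\<Union>c\<in>A. PiE B (\<lambda>i. {c i}))" using \<open>c \<in> A\<close> by blast
  next
    fix f assume "f \<in> (\<Union>c\<in>A. PiE B (\<lambda>i. {c i}))"
    then obtain c where c: "c \<in> A" "f \<in> PiE B (\<lambda>i. {c i})" by auto
    then have "c \<in> extensional B" using A sp by (auto simp: PiE_def)
    then show "f \<in> A" using c by (auto simp: PiE_singleton)
  qed
  moreover have "countable A"
    using A sp countable_PiE[OF B, of "\<lambda>_. UNIV :: nat set"] by (auto intro: countable_subset)
  ultimately show ?thesis
    by (metis (no_types, lifting) B image_subsetI sets.countable_UN' sets_PiM_I_finite sets_count_space UNIV_I Pow_UNIV)
qed

lemma PiM_nat_measurable:
  "finite B \<Longrightarrow> f \<in> measurable (PiM B (\<lambda>_. count_space (UNIV::nat set))) (count_space (UNIV::nat set))"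
  by (auto simp: measurable_count_space_eq2_countable intro!: PiM_nat_sets)

lemma N_meas:
  assumes ind: "indep_vars (\<lambda>_. count_space UNIV) N I" and "i \<in> I"
  shows "N i \<in> measurable M (count_space (UNIV::nat set))"
  using assms unfolding indep_vars_def by auto

lemma sum_meas:
  assumes ind: "indep_vars (\<lambda>_. count_space (UNIV::nat set)) N I" and B: "B \<subseteq> I" "finite B"
  shows "(\<lambda>\<omega>. \<Sum>i\<in>B. N i \<omega>) \<in> measurable M (count_space (UNIV::nat set))"
proof -
  have R: "(\<lambda>\<omega>. restrict (\<lambda>i. N i \<omega>) B) \<in> measurable M (PiM B (\<lambda>_. count_space (UNIV::nat set)))"
    using N_meas[OF ind] B by (intro measurable_restrict) auto
  have "(\<lambda>\<omega>. (\<lambda>f. \<Sum>i\<in>B. f i) (restrict (\<lambda>i. N i \<omega>) B)) \<in> measurable M (count_space (UNIV::nat set))"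
    by (rule measurable_compose[OF R PiM_nat_measurable[OF B(2)]])
  then show ?thesis by simp
qed

lemma nat_event:
  assumes "f \<in> measurable M (count_space (UNIV::nat set))"
  shows "{\<omega>\<in>space M. P (f \<omega>)} \<in> sets M"
proof -
  have "{\<omega>\<in>space M. P (f \<omega>)} = f -` {x. P x} \<inter> space M" by auto
  then show ?thesis using measurable_sets[OF assms, of "{x. P x}"] by simp
qed

lemma indep_N_sum:
  assumes ind: "indep_vars (\<lambda>_. count_space (UNIV::nat set)) N I" and a: "a \<in> I" "a \<notin> B"
    and B: "B \<subseteq> I" "finite B"
  shows "prob {\<omega>\<in>space M. N a \<omega> = l \<and> (\<Sum>i\<in>B. N i \<omega>) \<le> y} =
     prob {\<omega>\<in>space M. N a \<omega> = l} * prob {\<omega>\<in>space M. (\<Sum>i\<in>B. N i \<omega>) \<le> y}"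
proof -
  have "indep_var (PiM {a} (\<lambda>_. count_space UNIV)) (\<lambda>\<omega>. restrict (\<lambda>i. N i \<omega>) {a})
      (PiM B (\<lambda>_. count_space UNIV)) (\<lambda>\<omega>. restrict (\<lambda>i. N i \<omega>) B)"
    by (rule indep_var_restrict[OF ind]) (use a B in auto)
  then have iv: "indep_var (count_space UNIV) ((\<lambda>f. f a) \<circ> (\<lambda>\<omega>. restrict (\<lambda>i. N i \<omega>) {a}))
      (count_space UNIV) ((\<lambda>f. \<Sum>i\<in>B. f i) \<circ> (\<lambda>\<omega>. restrict (\<lambda>i. N i \<omega>) B))"
    by (rule indep_var_compose) (auto intro: PiM_nat_measurable B)
  have s: "\<And>\<omega>. (\<Sum>i\<in>B. restrict (\<lambda>i. N i \<omega>) B i) = (\<Sum>i\<in>B. N i \<omega>)"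
    by (rule sum.cong) auto
  from indep_varD[OF iv, of "{l}" "{..y}"] show ?thesis
    by (simp add: s vimage_def Int_def conj_commute)
qed

lemma prob_le_sum:
  assumes f: "f \<in> measurable M (count_space (UNIV::nat set))"
    and E: "\<And>l. {\<omega>\<in>space M. E l \<omega>} \<in> sets M"
  shows "prob {\<omega>\<in>space M. f \<omega> \<le> x \<and> E (f \<omega>) \<omega>} = (\<Sum>l\<le>x. prob {\<omega>\<in>space M. f \<omega> = l \<and> E l \<omega>})"
proof (induction x)
  case 0
  have "{\<omega>\<in>space M. f \<omega> \<le> 0 \<and> E (f \<omega>) \<omega>} = {\<omega>\<in>space M. f \<omega> = 0 \<and> E 0 \<omega>}" by auto
  then show ?case by simp
next
  case (Suc x)
  have ev: "\<And>l. {\<omega>\<in>space M. f \<omega> = l \<and> E l \<omega>} \<in> sets M"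
  proof -
    fix l
    have "{\<omega>\<in>space M. f \<omega> = l \<and> E l \<omega>} = {\<omega>\<in>space M. f \<omega> = l} \<inter> {\<omega>\<in>space M. E l \<omega>}" by auto
    then show "{\<omega>\<in>space M. f \<omega> = l \<and> E l \<omega>} \<in> sets M" using nat_event[OF f] E by auto
  qed
  have ev2: "{\<omega>\<in>space M. f \<omega> \<le> x \<and> E (f \<omega>) \<omega>} \<in> sets M"
  proof -
    have "{\<omega>\<in>space M. f \<omega> \<le> x \<and> E (f \<omega>) \<omega>} = (\<Union>l\<in>{..x}. {\<omega>\<in>space M. f \<omega> = l \<and> E l \<omega>})" by auto
    then show ?thesis using ev by auto
  qed
  have "{\<omega>\<in>space M. f \<omega> \<le> Suc x \<and> E (f \<omega>) \<omega>} =
    {\<omega>\<in>space M. f \<omega> \<le> x \<and> E (f \<omega>) \<omega>} \<union> {\<omega>\<in>space M. f \<omega> = Suc x \<and> E (Suc x) \<omega>}"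
    by (auto simp: le_Suc_eq)
  then have "prob {\<omega>\<in>space M. f \<omega> \<le> Suc x \<and> E (f \<omega>) \<omega>} =
    prob {\<omega>\<in>space M. f \<omega> \<le> x \<and> E (f \<omega>) \<omega>} + prob {\<omega>\<in>space M. f \<omega> = Suc x \<and> E (Suc x) \<omega>}"
    using ev ev2 by (simp add: finite_measure_Union disjoint_iff)
  then show ?case using Suc by simp
qed

end

context prob_space
begin

lemma adm_sum:
  assumes "finite A" "A \<noteq> {}" "\<And>i. i \<in> A \<Longrightarrow> adm (v i)" "\<And>V W. adm V \<Longrightarrow> adm W \<Longrightarrow> adm (V + W)"
  shows "adm (\<Sum>i\<in>A. v i)"
  using assms by (induction A rule: finite_ne_induct) auto

lemma dom_le:
  fixes P :: "real \<Rightarrow> real \<Rightarrow> nat \<Rightarrow> real" and adm :: "real \<Rightarrow> bool" and Theta :: "real set"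
  assumes ind: "indep_vars (\<lambda>_. count_space (UNIV::nat set)) N I"
    and pmf: "\<And>i l. i \<in> I \<Longrightarrow> prob {\<omega>\<in>space M. N i \<omega> = l} = P (v i) (mu i) l"
    and adm: "\<And>i. i \<in> I \<Longrightarrow> adm (v i)" and adm_add: "\<And>V W. adm V \<Longrightarrow> adm W \<Longrightarrow> adm (V + W)"
    and Th: "\<And>i. i \<in> I \<Longrightarrow> mu i \<in> Theta" and m0: "m0 \<in> Theta"
    and nonneg: "\<And>V mu l. adm V \<Longrightarrow> mu \<in> Theta \<Longrightarrow> 0 \<le> P V mu l"
    and conv: "\<And>V W mu s. adm V \<Longrightarrow> adm W \<Longrightarrow> mu \<in> Theta \<Longrightarrow> (\<Sum>r\<le>s. P V mu r * P W mu (s - r)) = P (V + W) mu s"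
    and mono: "\<And>V mu mu' x. adm V \<Longrightarrow> mu \<in> Theta \<Longrightarrow> mu' \<in> Theta \<Longrightarrow> mu \<le> mu' \<Longrightarrow> (\<Sum>l\<le>x. P V mu' l) \<le> (\<Sum>l\<le>x. P V mu l)"
    and A: "finite A" "A \<noteq> {}" "A \<subseteq> I" and le: "\<And>i. i \<in> A \<Longrightarrow> mu i \<le> m0"
  shows "(\<Sum>l\<le>x. P (\<Sum>i\<in>A. v i) m0 l) \<le> prob {\<omega>\<in>space M. (\<Sum>i\<in>A. N i \<omega>) \<le> x}"
  using A le
proof (induction A arbitrary: x rule: finite_ne_induct)
  case (singleton a)
  have a: "a \<in> I" using singleton by simp
  have "prob {\<omega>\<in>space M. N a \<omega> \<le> x \<and> True} = (\<Sum>l\<le>x. prob {\<omega>\<in>space M. N a \<omega> = l \<and> True})"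
    by (rule prob_le_sum[OF N_meas[OF ind a]]) simp
  also have "\<dots> = (\<Sum>l\<le>x. P (v a) (mu a) l)" using pmf[OF a] by simp
  finally have "prob {\<omega>\<in>space M. N a \<omega> \<le> x} = (\<Sum>l\<le>x. P (v a) (mu a) l)" by simp
  moreover have "(\<Sum>l\<le>x. P (v a) m0 l) \<le> (\<Sum>l\<le>x. P (v a) (mu a) l)"
    using mono[OF adm[OF a] Th[OF a] m0] singleton by simp
  ultimately show ?case by simp
next
  case (insert a A)
  have a: "a \<in> I" and AI: "A \<subseteq> I" using insert.prems(1) by auto
  define VA where "VA = (\<Sum>i\<in>A. v i)"
  have admA: "adm VA" unfolding VA_def
  proof (rule adm_sum)
    show "finite A" "A \<noteq> {}" using insert.hyps by auto
    show "\<And>i. i \<in> A \<Longrightarrow> adm (v i)" using AI adm by auto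
    show "\<And>V W. adm V \<Longrightarrow> adm W \<Longrightarrow> adm (V + W)" by (rule adm_add)
  qed
  have ma: "mu a \<le> m0" using insert.prems(2) by simp
  have IH: "\<And>y. (\<Sum>l\<le>y. P VA m0 l) \<le> prob {\<omega>\<in>space M. (\<Sum>i\<in>A. N i \<omega>) \<le> y}"
    unfolding VA_def by (intro insert.IH) (use insert.prems in auto)
  let ?pa = "\<lambda>l. P (v a) (mu a) l" and ?pa' = "\<lambda>l. P (v a) m0 l" and ?q = "\<lambda>r. P VA m0 r"
  have Smeas: "(\<lambda>\<omega>. \<Sum>i\<in>A. N i \<omega>) \<in> measurable M (count_space UNIV)"
    using sum_meas[OF ind AI] insert.hyps by simp
  have "(\<Sum>l\<le>x. P (\<Sum>i\<in>insert a A. v i) m0 l) = (\<Sum>s\<le>x. P (VA + v a) m0 s)"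
    using insert.hyps by (simp add: VA_def add.commute)
  also have "\<dots> = (\<Sum>s\<le>x. \<Sum>r\<le>s. ?q r * ?pa' (s - r))"
    using conv[OF admA adm[OF a] m0] by simp
  also have "\<dots> = (\<Sum>r\<le>x. \<Sum>l\<le>x - r. ?q r * ?pa' l)"
    by (rule tri_conv[symmetric])
  also have "\<dots> = (\<Sum>r\<le>x. ?q r * (\<Sum>l\<le>x - r. ?pa' l))"
    by (simp add: sum_distrib_left)
  also have "\<dots> \<le> (\<Sum>r\<le>x. ?q r * (\<Sum>l\<le>x - r. ?pa l))"
    by (rule sum_mono, rule mult_left_mono; use mono[OF adm[OF a] Th[OF a] m0 ma] nonneg[OF admA m0] in auto)
  also have "\<dots> = (\<Sum>r\<le>x. \<Sum>l\<le>x - r. ?pa l * ?q r)"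
    by (simp add: sum_distrib_left mult.commute)
  also have "\<dots> = (\<Sum>l\<le>x. \<Sum>r\<le>x - l. ?pa l * ?q r)"
    by (rule tri_swap[symmetric])
  also have "\<dots> = (\<Sum>l\<le>x. ?pa l * (\<Sum>r\<le>x - l. ?q r))"
    by (simp add: sum_distrib_left)
  also have "\<dots> \<le> (\<Sum>l\<le>x. ?pa l * prob {\<omega>\<in>space M. (\<Sum>i\<in>A. N i \<omega>) \<le> x - l})"
    using IH nonneg[OF adm[OF a] Th[OF a]] by (intro sum_mono mult_left_mono) auto
  also have "\<dots> = (\<Sum>l\<le>x. prob {\<omega>\<in>space M. N a \<omega> = l \<and> (\<Sum>i\<in>A. N i \<omega>) \<le> x - l})"
    using indep_N_sum[OF ind a _ AI] insert.hyps pmf[OF a] by simp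
  also have "\<dots> = prob {\<omega>\<in>space M. N a \<omega> \<le> x \<and> (\<Sum>i\<in>A. N i \<omega>) \<le> x - N a \<omega>}"
    by (rule prob_le_sum[symmetric, OF N_meas[OF ind a]]) (rule nat_event[OF Smeas])
  also have "{\<omega>\<in>space M. N a \<omega> \<le> x \<and> (\<Sum>i\<in>A. N i \<omega>) \<le> x - N a \<omega>} = {\<omega>\<in>space M. (\<Sum>i\<in>insert a A. N i \<omega>) \<le> x}"
    using insert.hyps by auto
  finally show ?case .
qed

lemma dom_ge:
  fixes P :: "real \<Rightarrow> real \<Rightarrow> nat \<Rightarrow> real" and adm :: "real \<Rightarrow> bool" and Theta :: "real set"
  assumes ind: "indep_vars (\<lambda>_. count_space (UNIV::nat set)) N I"
    and pmf: "\<And>i l. i \<in> I \<Longrightarrow> prob {\<omega>\<in>space M. N i \<omega> = l} = P (v i) (mu i) l"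
    and adm: "\<And>i. i \<in> I \<Longrightarrow> adm (v i)" and adm_add: "\<And>V W. adm V \<Longrightarrow> adm W \<Longrightarrow> adm (V + W)"
    and Th: "\<And>i. i \<in> I \<Longrightarrow> mu i \<in> Theta" and m0: "m0 \<in> Theta"
    and nonneg: "\<And>V mu l. adm V \<Longrightarrow> mu \<in> Theta \<Longrightarrow> 0 \<le> P V mu l"
    and conv: "\<And>V W mu s. adm V \<Longrightarrow> adm W \<Longrightarrow> mu \<in> Theta \<Longrightarrow> (\<Sum>r\<le>s. P V mu r * P W mu (s - r)) = P (V + W) mu s"
    and mono: "\<And>V mu mu' x. adm V \<Longrightarrow> mu \<in> Theta \<Longrightarrow> mu' \<in> Theta \<Longrightarrow> mu \<le> mu' \<Longrightarrow> (\<Sum>l\<le>x. P V mu' l) \<le> (\<Sum>l\<le>x. P V mu l)"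
    and A: "finite A" "A \<noteq> {}" "A \<subseteq> I" and le: "\<And>i. i \<in> A \<Longrightarrow> m0 \<le> mu i"
  shows "prob {\<omega>\<in>space M. (\<Sum>i\<in>A. N i \<omega>) \<le> x} \<le> (\<Sum>l\<le>x. P (\<Sum>i\<in>A. v i) m0 l)"
  using A le
proof (induction A arbitrary: x rule: finite_ne_induct)
  case (singleton a)
  have a: "a \<in> I" using singleton by simp
  have "prob {\<omega>\<in>space M. N a \<omega> \<le> x \<and> True} = (\<Sum>l\<le>x. prob {\<omega>\<in>space M. N a \<omega> = l \<and> True})"
    by (rule prob_le_sum[OF N_meas[OF ind a]]) simp
  also have "\<dots> = (\<Sum>l\<le>x. P (v a) (mu a) l)" using pmf[OF a] by simp
  finally have "prob {\<omega>\<in>space M. N a \<omega> \<le> x} = (\<Sum>l\<le>x. P (v a) (mu a) l)" by simp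
  moreover have "(\<Sum>l\<le>x. P (v a) (mu a) l) \<le> (\<Sum>l\<le>x. P (v a) m0 l)"
    using mono[OF adm[OF a] m0 Th[OF a]] singleton by simp
  ultimately show ?case by simp
next
  case (insert a A)
  have a: "a \<in> I" and AI: "A \<subseteq> I" using insert.prems(1) by auto
  define VA where "VA = (\<Sum>i\<in>A. v i)"
  have admA: "adm VA" unfolding VA_def
  proof (rule adm_sum)
    show "finite A" "A \<noteq> {}" using insert.hyps by auto
    show "\<And>i. i \<in> A \<Longrightarrow> adm (v i)" using AI adm by auto
    show "\<And>V W. adm V \<Longrightarrow> adm W \<Longrightarrow> adm (V + W)" by (rule adm_add)
  qed
  have ma: "m0 \<le> mu a" using insert.prems(2) by simp
  have IH: "\<And>y. prob {\<omega>\<in>space M. (\<Sum>i\<in>A. N i \<omega>) \<le> y} \<le> (\<Sum>l\<le>y. P VA m0 l)"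
    unfolding VA_def by (intro insert.IH) (use insert.prems in auto)
  let ?pa = "\<lambda>l. P (v a) (mu a) l" and ?pa' = "\<lambda>l. P (v a) m0 l" and ?q = "\<lambda>r. P VA m0 r"
  have Smeas: "(\<lambda>\<omega>. \<Sum>i\<in>A. N i \<omega>) \<in> measurable M (count_space UNIV)"
    using sum_meas[OF ind AI] insert.hyps by simp
  have "{\<omega>\<in>space M. (\<Sum>i\<in>insert a A. N i \<omega>) \<le> x} = {\<omega>\<in>space M. N a \<omega> \<le> x \<and> (\<Sum>i\<in>A. N i \<omega>) \<le> x - N a \<omega>}"
    using insert.hyps by auto
  then have "prob {\<omega>\<in>space M. (\<Sum>i\<in>insert a A. N i \<omega>) \<le> x} = prob {\<omega>\<in>space M. N a \<omega> \<le> x \<and> (\<Sum>i\<in>A. N i \<omega>) \<le> x - N a \<omega>}"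
    by simp
  also have "\<dots> = (\<Sum>l\<le>x. prob {\<omega>\<in>space M. N a \<omega> = l \<and> (\<Sum>i\<in>A. N i \<omega>) \<le> x - l})"
    by (rule prob_le_sum[OF N_meas[OF ind a]]) (rule nat_event[OF Smeas])
  also have "\<dots> = (\<Sum>l\<le>x. ?pa l * prob {\<omega>\<in>space M. (\<Sum>i\<in>A. N i \<omega>) \<le> x - l})"
    using indep_N_sum[OF ind a _ AI] insert.hyps pmf[OF a] by simp
  also have "\<dots> \<le> (\<Sum>l\<le>x. ?pa l * (\<Sum>r\<le>x - l. ?q r))"
    using IH nonneg[OF adm[OF a] Th[OF a]] by (intro sum_mono mult_left_mono) auto
  also have "\<dots> = (\<Sum>l\<le>x. \<Sum>r\<le>x - l. ?pa l * ?q r)"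
    by (simp add: sum_distrib_left)
  also have "\<dots> = (\<Sum>r\<le>x. \<Sum>l\<le>x - r. ?pa l * ?q r)"
    by (rule tri_swap)
  also have "\<dots> = (\<Sum>r\<le>x. ?q r * (\<Sum>l\<le>x - r. ?pa l))"
    by (simp add: sum_distrib_left mult.commute)
  also have "\<dots> \<le> (\<Sum>r\<le>x. ?q r * (\<Sum>l\<le>x - r. ?pa' l))"
    by (rule sum_mono, rule mult_left_mono; use mono[OF adm[OF a] m0 Th[OF a] ma] nonneg[OF admA m0] in auto)
  also have "\<dots> = (\<Sum>r\<le>x. \<Sum>l\<le>x - r. ?q r * ?pa' l)"
    by (simp add: sum_distrib_left)
  also have "\<dots> = (\<Sum>s\<le>x. \<Sum>r\<le>s. ?q r * ?pa' (s - r))"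
    by (rule tri_conv)
  also have "\<dots> = (\<Sum>s\<le>x. P (VA + v a) m0 s)"
    using conv[OF admA adm[OF a] m0] by simp
  also have "\<dots> = (\<Sum>l\<le>x. P (\<Sum>i\<in>insert a A. v i) m0 l)"
    using insert.hyps by (simp add: VA_def add.commute)
  finally show ?case .
qed

end

lemma bin_pf_conv:
  fixes p :: real
  shows "(\<Sum>r\<le>s. bin_pf m1 p r * bin_pf m2 p (s - r)) = bin_pf (m1 + m2) p s"
proof -
  have trm: "bin_pf m1 p r * bin_pf m2 p (s - r) =
      real ((m1 choose r) * (m2 choose (s - r))) * (p ^ s * (1 - p) ^ (m1 + m2 - s))" if r: "r \<le> s" for r
  proof (cases "r \<le> m1 \<and> s - r \<le> m2")
    case True
    have e1: "p ^ r * p ^ (s - r) = p ^ s" using r by (simp flip: power_add)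
    have ex: "(m1 - r) + (m2 - (s - r)) = m1 + m2 - s" using r True by arith
    have e2: "(1 - p) ^ (m1 - r) * (1 - p) ^ (m2 - (s - r)) = (1 - p) ^ (m1 + m2 - s)"
      by (subst power_add[symmetric]) (simp only: ex)
    have "bin_pf m1 p r * bin_pf m2 p (s - r) = real (m1 choose r) * real (m2 choose (s - r)) *
        (p ^ r * p ^ (s - r)) * ((1 - p) ^ (m1 - r) * (1 - p) ^ (m2 - (s - r)))"
      unfolding bin_pf_def by (simp only: mult_ac)
    also have "\<dots> = real ((m1 choose r) * (m2 choose (s - r))) * (p ^ s * (1 - p) ^ (m1 + m2 - s))"
      unfolding e1 e2 by simp
    finally show ?thesis .
  next
    case False
    then have "m1 choose r = 0 \<or> m2 choose (s - r) = 0" by auto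
    then show ?thesis unfolding bin_pf_def by auto
  qed
  have "(\<Sum>r\<le>s. bin_pf m1 p r * bin_pf m2 p (s - r)) =
      (\<Sum>r\<le>s. real ((m1 choose r) * (m2 choose (s - r))) * (p ^ s * (1 - p) ^ (m1 + m2 - s)))"
    using trm by (intro sum.cong) auto
  also have "\<dots> = real (\<Sum>r\<le>s. (m1 choose r) * (m2 choose (s - r))) * (p ^ s * (1 - p) ^ (m1 + m2 - s))"
    by (simp add: sum_distrib_right)
  also have "\<dots> = bin_pf (m1 + m2) p s"
    unfolding vandermonde bin_pf_def by simp
  finally show ?thesis .
qed

lemma poi_pf_conv:
  fixes a b :: real
  shows "(\<Sum>r\<le>s. poi_pf a r * poi_pf b (s - r)) = poi_pf (a + b) s"
proof -
  have trm: "poi_pf a r * poi_pf b (s - r) = (of_nat (s choose r) * a ^ r * b ^ (s - r)) * (exp (- (a + b)) / fact s)"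
    if r: "r \<le> s" for r
  proof -
    have "of_nat (s choose r) = (fact s / (fact r * fact (s - r)) :: real)" using binomial_fact[OF r] by simp
    moreover have "exp (- (a + b)) = exp (- a) * exp (- b)" by (simp flip: exp_add)
    ultimately show ?thesis unfolding poi_pf_def by (simp add: field_simps)
  qed
  have "(\<Sum>r\<le>s. poi_pf a r * poi_pf b (s - r)) = (\<Sum>r\<le>s. (of_nat (s choose r) * a ^ r * b ^ (s - r)) * (exp (- (a + b)) / fact s))"
    using trm by (intro sum.cong) auto
  also have "\<dots> = (a + b) ^ s * (exp (- (a + b)) / fact s)"
    by (simp add: binomial_ring sum_distrib_right sum_divide_distrib)
  also have "\<dots> = poi_pf (a + b) s" by (simp add: poi_pf_def)
  finally show ?thesis .
qed

lemma nb_pf_poch: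
  assumes "0 < g"
  shows "nb_pf g p l = pochhammer g l / fact l * p ^ l * (1 - p) powr g"
  using pochhammer_Gamma[OF pos_not_nonpos_Int[OF assms], of l] unfolding nb_pf_def
  by (simp add: add.commute)

lemma nb_pf_conv:
  assumes g1: "0 < g1" and g2: "0 < g2" and p: "p < 1"
  shows "(\<Sum>r\<le>s. nb_pf g1 p r * nb_pf g2 p (s - r)) = nb_pf (g1 + g2) p s"
proof -
  have trm: "nb_pf g1 p r * nb_pf g2 p (s - r) =
      (of_nat (s choose r) * pochhammer g1 r * pochhammer g2 (s - r)) * (p ^ s * (1 - p) powr (g1 + g2) / fact s)"
    if r: "r \<le> s" for r
  proof -
    have "of_nat (s choose r) = (fact s / (fact r * fact (s - r)) :: real)" using binomial_fact[OF r] by simp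
    moreover have "p ^ r * p ^ (s - r) = p ^ s" using r by (simp flip: power_add)
    moreover have "(1 - p) powr g1 * (1 - p) powr g2 = (1 - p) powr (g1 + g2)" by (simp add: powr_add)
    ultimately show ?thesis unfolding nb_pf_poch[OF g1] nb_pf_poch[OF g2]
      by (simp add: field_simps)
  qed
  have "(\<Sum>r\<le>s. nb_pf g1 p r * nb_pf g2 p (s - r)) =
      (\<Sum>r\<le>s. (of_nat (s choose r) * pochhammer g1 r * pochhammer g2 (s - r)) * (p ^ s * (1 - p) powr (g1 + g2) / fact s))"
    using trm by (intro sum.cong) auto
  also have "\<dots> = pochhammer (g1 + g2) s * (p ^ s * (1 - p) powr (g1 + g2) / fact s)"
    by (simp add: pochhammer_binomial_sum sum_distrib_right sum_divide_distrib)
  also have "\<dots> = nb_pf (g1 + g2) p s" using g1 g2 by (simp add: nb_pf_poch)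
  finally show ?thesis .
qed

lemma bin_sum_all:
  assumes "m \<le> x"
  shows "(\<Sum>l\<le>x. bin_pf m p l) = 1"
proof -
  have "(\<Sum>l\<le>x. bin_pf m p l) = (\<Sum>l\<le>m. bin_pf m p l)"
    using assms by (intro sum.mono_neutral_right) (auto simp: bin_pf_def)
  also have "\<dots> = (p + (1 - p)) ^ m"
    unfolding binomial_ring bin_pf_def by (simp add: mult.assoc)
  finally show ?thesis by simp
qed

lemma bin_mono:
  assumes "mu \<in> {0<..<1}" "mu' \<in> {0<..<1}" "mu \<le> mu'"
  shows "(\<Sum>l\<le>x. bin_pf m mu' l) \<le> (\<Sum>l\<le>x. bin_pf m mu l)"
proof (cases "x < m")
  case True
  show ?thesis
  proof (cases "mu = mu'")
    case False
    then show ?thesis using binS_props(2)[OF True, of mu mu'] assms by auto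
  qed simp
next
  case False
  then show ?thesis using bin_sum_all[of m x] by simp
qed

lemma poi_mono:
  assumes "0 \<le> a" "a \<le> b"
  shows "(\<Sum>l\<le>x. poi_pf b l) \<le> (\<Sum>l\<le>x. poi_pf a l)"
proof (cases "a = b")
  case False
  then show ?thesis using poiS_props(2)[of a b x] assms by auto
qed simp

lemma nb_mono:
  assumes "0 < g" "0 \<le> a" "a \<le> b" "b < 1"
  shows "(\<Sum>l\<le>x. nb_pf g b l) \<le> (\<Sum>l\<le>x. nb_pf g a l)"
proof (cases "a = b")
  case False
  then show ?thesis using nbS_props(2)[OF assms(1), of a b x] assms by auto
qed simp

context prob_space
begin

lemma BL_bound:
  fixes X :: "'a \<Rightarrow> nat" and p :: "nat \<Rightarrow> real"
  assumes Xm: "X \<in> measurable M (count_space UNIV)" and nn: "\<And>l. 0 \<le> p l" and d: "0 < d" "d < 1"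
    and dom: "\<And>y. (\<Sum>l\<le>y. p l) \<le> prob {\<omega>\<in>space M. X \<omega> \<le> y}"
  shows "prob {\<omega>\<in>space M. 1 - d < (\<Sum>l<X \<omega>. p l)} \<le> d"
proof (cases "\<exists>x. 1 - d < (\<Sum>l<x. p l)")
  case False
  then have "{\<omega>\<in>space M. 1 - d < (\<Sum>l<X \<omega>. p l)} = {}" by auto
  then show ?thesis using d by (simp only:) simp
next
  case True
  define x0 where "x0 = (LEAST x. 1 - d < (\<Sum>l<x. p l))"
  have x0: "1 - d < (\<Sum>l<x0. p l)" unfolding x0_def using True by (rule LeastI_ex)
  have notx: "\<And>x. x < x0 \<Longrightarrow> \<not> 1 - d < (\<Sum>l<x. p l)" unfolding x0_def by (rule not_less_Least)
  have mono: "\<And>x y. x \<le> y \<Longrightarrow> (\<Sum>l<x. p l) \<le> (\<Sum>l<y. p l)"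
    using nn by (intro sum_mono2) auto
  have "x0 \<noteq> 0" using x0 d by (intro notI) simp
  then obtain y where y: "x0 = Suc y" by (cases x0) auto
  have eq: "{\<omega>\<in>space M. 1 - d < (\<Sum>l<X \<omega>. p l)} = space M - {\<omega>\<in>space M. X \<omega> \<le> y}"
  proof (intro equalityI subsetI)
    fix \<omega> assume "\<omega> \<in> {\<omega>\<in>space M. 1 - d < (\<Sum>l<X \<omega>. p l)}"
    then show "\<omega> \<in> space M - {\<omega>\<in>space M. X \<omega> \<le> y}" using notx[of "X \<omega>"] y by auto
  next
    fix \<omega> assume w: "\<omega> \<in> space M - {\<omega>\<in>space M. X \<omega> \<le> y}"
    then have "x0 \<le> X \<omega>" using y by auto
    then show "\<omega> \<in> {\<omega>\<in>space M. 1 - d < (\<Sum>l<X \<omega>. p l)}" using mono[of x0 "X \<omega>"] x0 w by auto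
  qed
  have ev: "{\<omega>\<in>space M. X \<omega> \<le> y} \<in> sets M" by (rule nat_event[OF Xm])
  have "prob {\<omega>\<in>space M. 1 - d < (\<Sum>l<X \<omega>. p l)} = 1 - prob {\<omega>\<in>space M. X \<omega> \<le> y}"
    unfolding eq using prob_compl[OF ev] by simp
  also have "\<dots> \<le> 1 - (\<Sum>l\<le>y. p l)" using dom[of y] by simp
  also have "(\<Sum>l\<le>y. p l) = (\<Sum>l<x0. p l)" using y by (simp add: lessThan_Suc_atMost)
  finally show ?thesis using x0 by simp
qed

lemma BU_bound:
  fixes X :: "'a \<Rightarrow> nat" and p :: "nat \<Rightarrow> real"
  assumes Xm: "X \<in> measurable M (count_space UNIV)" and nn: "\<And>l. 0 \<le> p l" and d: "0 < d" "d < 1"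
    and dom: "\<And>y. prob {\<omega>\<in>space M. X \<omega> \<le> y} \<le> (\<Sum>l\<le>y. p l)"
  shows "prob {\<omega>\<in>space M. (\<Sum>l\<le>X \<omega>. p l) < d} \<le> d"
proof -
  have mono: "\<And>x y. x \<le> y \<Longrightarrow> (\<Sum>l\<le>x. p l) \<le> (\<Sum>l\<le>y. p l)"
    using nn by (intro sum_mono2) auto
  have ev: "\<And>y. {\<omega>\<in>space M. X \<omega> \<le> y} \<in> sets M" by (rule nat_event[OF Xm])
  have "(\<lambda>y. prob {\<omega>\<in>space M. X \<omega> \<le> y}) \<longlonglongrightarrow> prob (\<Union>y. {\<omega>\<in>space M. X \<omega> \<le> y})"
    using ev by (intro finite_Lim_measure_incseq) (auto simp: incseq_def)
  moreover have "(\<Union>y. {\<omega>\<in>space M. X \<omega> \<le> y}) = space M" by auto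
  ultimately have lim: "(\<lambda>y. prob {\<omega>\<in>space M. X \<omega> \<le> y}) \<longlonglongrightarrow> 1" by (simp add: prob_space)
  then have "eventually (\<lambda>y. d < prob {\<omega>\<in>space M. X \<omega> \<le> y}) sequentially"
    using d by (intro order_tendstoD(1)) auto
  then obtain x1 where x1: "d < prob {\<omega>\<in>space M. X \<omega> \<le> x1}"
    by (auto simp: eventually_sequentially)
  then have cx1: "d < (\<Sum>l\<le>x1. p l)" using dom[of x1] by simp
  define D where "D = {x. (\<Sum>l\<le>x. p l) < d}"
  have Dsub: "D \<subseteq> {..<x1}"
  proof
    fix x assume "x \<in> D"
    then have "(\<Sum>l\<le>x. p l) < d" by (simp add: D_def)
    then show "x \<in> {..<x1}" using mono[of x1 x] cx1 by (cases "x < x1") auto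
  qed
  then have finD: "finite D" by (rule finite_subset) simp
  show ?thesis
  proof (cases "D = {}")
    case True
    then have "{\<omega>\<in>space M. (\<Sum>l\<le>X \<omega>. p l) < d} = {}" by (auto simp: D_def)
    then show ?thesis using d by (simp only:) simp
  next
    case False
    define x2 where "x2 = Max D"
    have x2D: "x2 \<in> D" unfolding x2_def using finD False by (rule Max_in)
    have eq: "{\<omega>\<in>space M. (\<Sum>l\<le>X \<omega>. p l) < d} = {\<omega>\<in>space M. X \<omega> \<le> x2}"
    proof (intro equalityI subsetI)
      fix \<omega> assume "\<omega> \<in> {\<omega>\<in>space M. (\<Sum>l\<le>X \<omega>. p l) < d}"
      then show "\<omega> \<in> {\<omega>\<in>space M. X \<omega> \<le> x2}" unfolding x2_def using finD by (auto simp: D_def)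
    next
      fix \<omega> assume "\<omega> \<in> {\<omega>\<in>space M. X \<omega> \<le> x2}"
      then show "\<omega> \<in> {\<omega>\<in>space M. (\<Sum>l\<le>X \<omega>. p l) < d}"
        using mono[of "X \<omega>" x2] x2D by (auto simp: D_def)
    qed
    show ?thesis unfolding eq using dom[of x2] x2D by (simp add: D_def)
  qed
qed

lemma meas_by_vec:
  assumes I: "finite I" and Nm: "\<And>i. i \<in> I \<Longrightarrow> N i \<in> measurable M (count_space (UNIV::nat set))"
    and P: "\<And>\<omega> \<omega>'. \<omega> \<in> space M \<Longrightarrow> \<omega>' \<in> space M \<Longrightarrow> (\<And>i. i \<in> I \<Longrightarrow> N i \<omega> = N i \<omega>') \<Longrightarrow> P \<omega> = P \<omega>'"
  shows "{\<omega>\<in>space M. P \<omega>} \<in> sets M"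
proof -
  let ?R = "\<lambda>\<omega>. restrict (\<lambda>i. N i \<omega>) I"
  have R: "?R \<in> measurable M (PiM I (\<lambda>_. count_space (UNIV::nat set)))"
    using Nm by (intro measurable_restrict) auto
  define A where "A = {f \<in> space (PiM I (\<lambda>_. count_space (UNIV::nat set))). \<exists>\<omega>\<in>space M. ?R \<omega> = f \<and> P \<omega>}"
  have A: "A \<in> sets (PiM I (\<lambda>_. count_space UNIV))" unfolding A_def by (rule PiM_nat_sets[OF I]) auto
  have "{\<omega>\<in>space M. P \<omega>} = ?R -` A \<inter> space M"
  proof (intro equalityI subsetI)
    fix \<omega> assume "\<omega> \<in> {\<omega>\<in>space M. P \<omega>}"
    then show "\<omega> \<in> ?R -` A \<inter> space M" unfolding A_def using measurable_space[OF R] by auto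
  next
    fix \<omega> assume w: "\<omega> \<in> ?R -` A \<inter> space M"
    then obtain \<omega>' where w': "\<omega>' \<in> space M" "?R \<omega>' = ?R \<omega>" "P \<omega>'" unfolding A_def by auto
    have "\<And>i. i \<in> I \<Longrightarrow> N i \<omega> = N i \<omega>'"
    proof -
      fix i assume "i \<in> I"
      then show "N i \<omega> = N i \<omega>'" using fun_cong[OF w'(2), of i] by simp
    qed
    then have "P \<omega> = P \<omega>'" using P[of \<omega> \<omega>'] w w'(1) by auto
    then show "\<omega> \<in> {\<omega>\<in>space M. P \<omega>}" using w w'(3) by auto
  qed
  then show ?thesis using measurable_sets[OF R A] by simp
qed

end

lemma Zjk_eq:
  assumes "\<And>i. i \<in> {j..k} \<Longrightarrow> v i \<noteq> 0"
  shows "Zjk phi v N \<omega> j k = phi * real (\<Sum>i\<in>{j..k}. N i \<omega>) / vsum v j k"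
proof -
  have "(\<Sum>i = j..k. v i * (phi * real (N i \<omega>) / v i)) = (\<Sum>i = j..k. phi * real (N i \<omega>))"
    using assms by (intro sum.cong) auto
  also have "\<dots> = phi * real (\<Sum>i\<in>{j..k}. N i \<omega>)" by (simp add: sum_distrib_left)
  finally show ?thesis unfolding Zjk_def by simp
qed

lemma (in prob_space) coverage:
  fixes fam :: "real \<Rightarrow> real \<Rightarrow> real \<Rightarrow> nat \<Rightarrow> real" and Theta :: "real set" and adm :: "real \<Rightarrow> bool"
    and N :: "nat \<Rightarrow> 'a \<Rightarrow> nat"
  assumes ind: "indep_vars (\<lambda>_. count_space UNIV) N {1..n}"
    and v_pos: "\<forall>i\<in>{1..n}. 0 < v i" and phi: "0 < phi" and alpha: "0 < alpha" "alpha < 1"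
    and J_sub: "J \<subseteq> {1..n} \<times> {1..n}" and J_ord: "\<forall>(j, k)\<in>J. j \<le> k"
    and mu_mono: "\<forall>i\<in>{1..n}. \<forall>j\<in>{1..n}. i \<le> j \<longrightarrow> mu i \<le> mu j"
    and delta_def: "delta = alpha / (2 * real (card J))"
    and pmf: "\<And>i l. i \<in> {1..n} \<Longrightarrow> prob {\<omega>\<in>space M. N i \<omega> = l} = fam phi (v i) (mu i) l"
    and adm: "\<And>i. i \<in> {1..n} \<Longrightarrow> adm (v i)" and adm_add: "\<And>V W. adm V \<Longrightarrow> adm W \<Longrightarrow> adm (V + W)"
    and Th: "\<And>i. i \<in> {1..n} \<Longrightarrow> mu i \<in> Theta"
    and nonneg: "\<And>V mu l. adm V \<Longrightarrow> mu \<in> Theta \<Longrightarrow> 0 \<le> fam phi V mu l"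
    and conv: "\<And>V W mu s. adm V \<Longrightarrow> adm W \<Longrightarrow> mu \<in> Theta \<Longrightarrow>
       (\<Sum>r\<le>s. fam phi V mu r * fam phi W mu (s - r)) = fam phi (V + W) mu s"
    and mono: "\<And>V mu mu' x. adm V \<Longrightarrow> mu \<in> Theta \<Longrightarrow> mu' \<in> Theta \<Longrightarrow> mu \<le> mu' \<Longrightarrow>
       (\<Sum>l\<le>x. fam phi V mu' l) \<le> (\<Sum>l\<le>x. fam phi V mu l)"
  shows "prob {\<omega>\<in>space M. \<forall>i\<in>{1..n}.
      conf_L J mu i (\<lambda>j k. l_delta fam Theta delta (Zjk phi v N \<omega> j k) (vsum v j k) phi) \<le> ereal (mu i)
    \<and> ereal (mu i) \<le> conf_U J mu i (\<lambda>j k. u_delta fam Theta delta (Zjk phi v N \<omega> j k) (vsum v j k) phi)}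
    \<ge> 1 - alpha" (is "prob ?G \<ge> _")
proof -
  define X where "X j k \<omega> = (\<Sum>i\<in>{j..k}. N i \<omega>)" for j k \<omega>
  have JI: "{j..k} \<subseteq> {1..n}" "j \<le> k" if "(j, k) \<in> J" for j k
    using that J_sub J_ord by auto
  have Zeq: "Zjk phi v N \<omega> j k = phi * real (X j k \<omega>) / vsum v j k" if "(j, k) \<in> J" for j k \<omega>
    unfolding X_def
  proof (rule Zjk_eq)
    fix i assume "i \<in> {j..k}"
    then have "i \<in> {1..n}" using JI[OF that] by auto
    then have "0 < v i" using v_pos by blast
    then show "v i \<noteq> 0" by simp
  qed
  have Vpos: "0 < vsum v j k" if "(j, k) \<in> J" for j k
    unfolding vsum_def
  proof (rule sum_pos)
    show "finite {j..k}" "{j..k} \<noteq> {}" using JI[OF that] by auto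
    fix i assume "i \<in> {j..k}"
    then have "i \<in> {1..n}" using JI[OF that] by auto
    then show "0 < v i" using v_pos by blast
  qed
  have vsum_eq: "vsum v j k = (\<Sum>i\<in>{j..k}. v i)" for j k by (simp add: vsum_def)
  have Xm: "X j k \<in> measurable M (count_space UNIV)" if "(j, k) \<in> J" for j k
    unfolding X_def[abs_def] using JI[OF that] by (intro sum_meas[OF ind]) auto
  have admV: "adm (vsum v j k)" if "(j, k) \<in> J" for j k
    unfolding vsum_eq
  proof (rule adm_sum)
    show "finite {j..k}" "{j..k} \<noteq> {}" using JI[OF that] by auto
    show "\<And>i. i \<in> {j..k} \<Longrightarrow> adm (v i)" using JI[OF that] adm by blast
    show "\<And>V W. adm V \<Longrightarrow> adm W \<Longrightarrow> adm (V + W)" by (rule adm_add)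
  qed
  define BL where "BL = (\<lambda>(j, k). {\<omega>\<in>space M. 1 - delta < (\<Sum>l<X j k \<omega>. fam phi (vsum v j k) (mu k) l)})"
  define BU where "BU = (\<lambda>(j, k). {\<omega>\<in>space M. (\<Sum>l\<le>X j k \<omega>. fam phi (vsum v j k) (mu j) l) < delta})"
  have BLm: "BL jk \<in> sets M" if "jk \<in> J" for jk
    using that unfolding BL_def by (cases jk) (auto intro!: nat_event Xm)
  have BUm: "BU jk \<in> sets M" if "jk \<in> J" for jk
    using that unfolding BU_def by (cases jk) (auto intro!: nat_event Xm)
  show ?thesis
  proof (cases "J = {}")
    case True
    then have "?G = space M" by (auto simp: conf_L_def conf_U_def)
    then show ?thesis using alpha by (simp add: prob_space)
  next
    case False
    have finJ: "finite J" using J_sub by (rule finite_subset) auto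
    then have cJ: "card J > 0" using False by auto
    have d: "0 < delta" "delta < 1"
    proof -
      show "0 < delta" unfolding delta_def using alpha cJ by simp
      have "real (card J) \<ge> 1" using cJ by simp
      then have "alpha / (2 * real (card J)) \<le> alpha / 2" using alpha by (intro divide_left_mono) auto
      then show "delta < 1" unfolding delta_def using alpha by simp
    qed
    have PBL: "prob (BL jk) \<le> delta" if "jk \<in> J" for jk
    proof -
      obtain j k where jk: "jk = (j, k)" by (cases jk)
      have jkJ: "(j, k) \<in> J" using that jk by simp
      have kI: "k \<in> {1..n}" using J_sub jkJ by auto
      show ?thesis unfolding jk BL_def
      proof (simp only: case_prod_conv, rule BL_bound[OF Xm[OF jkJ] _ d])
        show "\<And>l. 0 \<le> fam phi (vsum v j k) (mu k) l" by (rule nonneg[OF admV[OF jkJ] Th[OF kI]])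
        fix y
        show "(\<Sum>l\<le>y. fam phi (vsum v j k) (mu k) l) \<le> prob {\<omega> \<in> space M. X j k \<omega> \<le> y}"
          unfolding vsum_eq X_def
        proof (rule dom_le[OF ind pmf adm adm_add Th Th[OF kI] nonneg conv mono])
          show "finite {j..k}" "{j..k} \<noteq> {}" "{j..k} \<subseteq> {1..n}" using JI[OF jkJ] by auto
          fix i assume "i \<in> {j..k}"
          then show "mu i \<le> mu k" using mu_mono JI[OF jkJ] kI by auto
        qed
      qed
    qed
    have PBU: "prob (BU jk) \<le> delta" if "jk \<in> J" for jk
    proof -
      obtain j k where jk: "jk = (j, k)" by (cases jk)
      have jkJ: "(j, k) \<in> J" using that jk by simp
      have jI: "j \<in> {1..n}" using J_sub jkJ by auto
      show ?thesis unfolding jk BU_def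
      proof (simp only: case_prod_conv, rule BU_bound[OF Xm[OF jkJ] _ d])
        show "\<And>l. 0 \<le> fam phi (vsum v j k) (mu j) l" by (rule nonneg[OF admV[OF jkJ] Th[OF jI]])
        fix y
        show "prob {\<omega> \<in> space M. X j k \<omega> \<le> y} \<le> (\<Sum>l\<le>y. fam phi (vsum v j k) (mu j) l)"
          unfolding vsum_eq X_def
        proof (rule dom_ge[OF ind pmf adm adm_add Th Th[OF jI] nonneg conv mono])
          show "finite {j..k}" "{j..k} \<noteq> {}" "{j..k} \<subseteq> {1..n}" using JI[OF jkJ] by auto
          fix i assume "i \<in> {j..k}"
          then show "mu j \<le> mu i" using mu_mono JI[OF jkJ] jI by auto
        qed
      qed
    qed
    define U where "U = (\<Union>jk\<in>J. BL jk \<union> BU jk)"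
    have Um: "U \<in> sets M" unfolding U_def using finJ BLm BUm by auto
    have "prob U \<le> (\<Sum>jk\<in>J. prob (BL jk \<union> BU jk))"
      unfolding U_def using finJ BLm BUm by (intro finite_measure_subadditive_finite) auto
    also have "\<dots> \<le> (\<Sum>jk\<in>J. 2 * delta)"
    proof (rule sum_mono)
      fix jk assume "jk \<in> J"
      then have "prob (BL jk \<union> BU jk) \<le> prob (BL jk) + prob (BU jk)"
        using BLm BUm by (intro measure_subadditive) (auto simp: emeasure_eq_measure)
      then show "prob (BL jk \<union> BU jk) \<le> 2 * delta" using PBL[OF \<open>jk \<in> J\<close>] PBU[OF \<open>jk \<in> J\<close>] by simp
    qed
    also have "\<dots> = alpha" unfolding delta_def using cJ by simp
    finally have PU: "prob U \<le> alpha" .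
    have sub: "space M - U \<subseteq> ?G"
    proof
      fix \<omega> assume w: "\<omega> \<in> space M - U"
      have notBL: "\<not> 1 - delta < (\<Sum>l<X j k \<omega>. fam phi (vsum v j k) (mu k) l)" if "(j, k) \<in> J" for j k
        using w that unfolding U_def BL_def by auto
      have notBU: "\<not> (\<Sum>l\<le>X j k \<omega>. fam phi (vsum v j k) (mu j) l) < delta" if "(j, k) \<in> J" for j k
        using w that unfolding U_def BU_def by auto
      have Lb: "l_delta fam Theta delta (Zjk phi v N \<omega> j k) (vsum v j k) phi \<le> ereal (mu k)" if jk: "(j, k) \<in> J" for j k
      proof -
        have kI: "k \<in> {1..n}" using J_sub jk by auto
        have "edf_cdf_strict fam phi (vsum v j k) (mu k) (Zjk phi v N \<omega> j k) \<le> 1 - delta"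
          unfolding Zeq[OF jk] edf_cdf_strict_nat[OF phi Vpos[OF jk]] using notBL[OF jk] by simp
        then have mem: "mu k \<in> {mu \<in> Theta. edf_cdf_strict fam phi (vsum v j k) mu (Zjk phi v N \<omega> j k) \<le> 1 - delta}"
          using Th[OF kI] by simp
        then show ?thesis unfolding l_delta_def Let_def
          by (subst if_not_P) (auto intro!: Inf_lower)
      qed
      have Ub: "ereal (mu j) \<le> u_delta fam Theta delta (Zjk phi v N \<omega> j k) (vsum v j k) phi" if jk: "(j, k) \<in> J" for j k
      proof -
        have jI: "j \<in> {1..n}" using J_sub jk by auto
        have "delta \<le> edf_cdf fam phi (vsum v j k) (mu j) (Zjk phi v N \<omega> j k)"
          unfolding Zeq[OF jk] edf_cdf_nat[OF phi Vpos[OF jk]] using notBU[OF jk] by simp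
        then have mem: "mu j \<in> {mu \<in> Theta. delta \<le> edf_cdf fam phi (vsum v j k) mu (Zjk phi v N \<omega> j k)}"
          using Th[OF jI] by simp
        then show ?thesis unfolding u_delta_def Let_def
          by (subst if_not_P) (auto intro!: Sup_upper)
      qed
      have "\<forall>i\<in>{1..n}.
      conf_L J mu i (\<lambda>j k. l_delta fam Theta delta (Zjk phi v N \<omega> j k) (vsum v j k) phi) \<le> ereal (mu i)
    \<and> ereal (mu i) \<le> conf_U J mu i (\<lambda>j k. u_delta fam Theta delta (Zjk phi v N \<omega> j k) (vsum v j k) phi)"
      proof (intro ballI conjI)
        fix i assume "i \<in> {1..n}"
        show "conf_L J mu i (\<lambda>j k. l_delta fam Theta delta (Zjk phi v N \<omega> j k) (vsum v j k) phi) \<le> ereal (mu i)"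
          unfolding conf_L_def
        proof (rule Sup_least)
          fix z assume "z \<in> (\<lambda>(j, k). l_delta fam Theta delta (Zjk phi v N \<omega> j k) (vsum v j k) phi) ` {(j, k) \<in> J. mu k \<le> mu i}"
          then obtain j k where jk: "(j, k) \<in> J" "mu k \<le> mu i" "z = l_delta fam Theta delta (Zjk phi v N \<omega> j k) (vsum v j k) phi"
            by auto
          have "z \<le> ereal (mu k)" using Lb[OF jk(1)] jk(3) by simp
          moreover have "ereal (mu k) \<le> ereal (mu i)" using jk(2) by simp
          ultimately show "z \<le> ereal (mu i)" by (rule order_trans)
        qed
        show "ereal (mu i) \<le> conf_U J mu i (\<lambda>j k. u_delta fam Theta delta (Zjk phi v N \<omega> j k) (vsum v j k) phi)"
          unfolding conf_U_def
        proof (rule Inf_greatest)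
          fix z assume "z \<in> (\<lambda>(j, k). u_delta fam Theta delta (Zjk phi v N \<omega> j k) (vsum v j k) phi) ` {(j, k) \<in> J. mu i \<le> mu j}"
          then obtain j k where jk: "(j, k) \<in> J" "mu i \<le> mu j" "z = u_delta fam Theta delta (Zjk phi v N \<omega> j k) (vsum v j k) phi"
            by auto
          have "ereal (mu j) \<le> z" using Ub[OF jk(1)] jk(3) by simp
          moreover have "ereal (mu i) \<le> ereal (mu j)" using jk(2) by simp
          ultimately show "ereal (mu i) \<le> z" by (rule order_trans[rotated])
        qed
      qed
      then show "\<omega> \<in> ?G" using w by blast
    qed
    have Gm: "?G \<in> sets M"
    proof (rule meas_by_vec[where I = "{1..n}"])
      show "\<And>i. i \<in> {1..n} \<Longrightarrow> N i \<in> measurable M (count_space UNIV)" by (rule N_meas[OF ind])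
      fix \<omega> \<omega>' assume agree: "\<And>i. i \<in> {1..n} \<Longrightarrow> N i \<omega> = N i \<omega>'"
      have ZZ: "Zjk phi v N \<omega> j k = Zjk phi v N \<omega>' j k" if "(j, k) \<in> J" for j k
      proof -
        have "X j k \<omega> = X j k \<omega>'" unfolding X_def using JI[OF that] agree by (intro sum.cong) auto
        then show ?thesis using Zeq[OF that] by simp
      qed
      have cL: "conf_L J mu i (\<lambda>j k. l_delta fam Theta delta (Zjk phi v N \<omega> j k) (vsum v j k) phi) =
          conf_L J mu i (\<lambda>j k. l_delta fam Theta delta (Zjk phi v N \<omega>' j k) (vsum v j k) phi)" for i
        unfolding conf_L_def using ZZ by (intro arg_cong[where f = Sup] image_cong) auto
      have cU: "conf_U J mu i (\<lambda>j k. u_delta fam Theta delta (Zjk phi v N \<omega> j k) (vsum v j k) phi) =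
          conf_U J mu i (\<lambda>j k. u_delta fam Theta delta (Zjk phi v N \<omega>' j k) (vsum v j k) phi)" for i
        unfolding conf_U_def using ZZ by (intro arg_cong[where f = Inf] image_cong) auto
      show "(\<forall>i\<in>{1..n}. conf_L J mu i (\<lambda>j k. l_delta fam Theta delta (Zjk phi v N \<omega> j k) (vsum v j k) phi) \<le> ereal (mu i)
          \<and> ereal (mu i) \<le> conf_U J mu i (\<lambda>j k. u_delta fam Theta delta (Zjk phi v N \<omega> j k) (vsum v j k) phi)) =
        (\<forall>i\<in>{1..n}. conf_L J mu i (\<lambda>j k. l_delta fam Theta delta (Zjk phi v N \<omega>' j k) (vsum v j k) phi) \<le> ereal (mu i)
          \<and> ereal (mu i) \<le> conf_U J mu i (\<lambda>j k. u_delta fam Theta delta (Zjk phi v N \<omega>' j k) (vsum v j k) phi))"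
        using cL cU by simp
    qed simp
    have "1 - alpha \<le> 1 - prob U" using PU by simp
    also have "\<dots> = prob (space M - U)" using prob_compl[OF Um] by simp
    also have "\<dots> \<le> prob ?G" using sub Gm by (intro finite_measure_mono) auto
    finally show ?thesis .
  qed
qed

lemma conf_L_cong: "(\<And>j k. (j, k) \<in> J \<Longrightarrow> f j k = g j k) \<Longrightarrow> conf_L J mu i f = conf_L J mu i g"
  unfolding conf_L_def by (intro arg_cong[where f = Sup] image_cong) auto

lemma conf_U_cong: "(\<And>j k. (j, k) \<in> J \<Longrightarrow> f j k = g j k) \<Longrightarrow> conf_U J mu i f = conf_U J mu i g"
  unfolding conf_U_def by (intro arg_cong[where f = Inf] image_cong) auto

lemma Zjk_J:
  assumes v_pos: "\<forall>i\<in>{1..n}. 0 < v i" and J_sub: "J \<subseteq> {1..n} \<times> {1..n}" and J_ord: "\<forall>(j, k)\<in>J. j \<le> k"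
    and jk: "(j, k) \<in> J"
  shows "Zjk phi v N \<omega> j k = phi * real (\<Sum>i\<in>{j..k}. N i \<omega>) / vsum v j k" and "0 < vsum v j k"
    and "{j..k} \<subseteq> {1..n}" and "j \<le> k"
proof -
  show sub: "{j..k} \<subseteq> {1..n}" and jk': "j \<le> k" using J_sub J_ord jk by auto
  have vp: "\<And>i. i \<in> {j..k} \<Longrightarrow> 0 < v i" using sub v_pos by blast
  show "Zjk phi v N \<omega> j k = phi * real (\<Sum>i\<in>{j..k}. N i \<omega>) / vsum v j k"
    by (rule Zjk_eq) (use vp in force)
  show "0 < vsum v j k" unfolding vsum_def using jk' vp by (intro sum_pos) auto
qed

lemma delta_bounds:
  fixes n :: nat and J :: "(nat \<times> nat) set"
  assumes J_sub: "J \<subseteq> {1..n} \<times> {1..n}" and alpha: "0 < alpha" "alpha < 1"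
    and delta_def: "delta = alpha / (2 * real (card J))" and jk: "(j, k) \<in> J"
  shows "0 < delta \<and> delta < 1"
proof -
  have "finite J" using J_sub by (rule finite_subset) auto
  then have cJ: "card J > 0" using jk by (auto simp: card_gt_0_iff)
  have "0 < delta" unfolding delta_def using alpha cJ by simp
  moreover have "real (card J) \<ge> 1" using cJ by simp
  then have "alpha / (2 * real (card J)) \<le> alpha / 2" using alpha by (intro divide_left_mono) auto
  then have "delta < 1" unfolding delta_def using alpha by simp
  ultimately show ?thesis by simp
qed

lemma bin_part:
  fixes M :: "'a measure" and n :: nat and N :: "nat \<Rightarrow> 'a \<Rightarrow> nat"
    and v mu :: "nat \<Rightarrow> real" and phi alpha delta :: real and J :: "(nat \<times> nat) set"
  assumes "prob_space M"
    and indep: "prob_space.indep_vars M (\<lambda>_. count_space UNIV) N {1..n}"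
    and v_pos: "\<forall>i\<in>{1..n}. 0 < v i"
    and phi_pos: "0 < phi"
    and alpha: "0 < alpha" "alpha < 1"
    and J_sub: "J \<subseteq> {1..n} \<times> {1..n}"
    and J_ord: "\<forall>(j, k)\<in>J. j \<le> k"
    and mu_mono: "\<forall>i\<in>{1..n}. \<forall>j\<in>{1..n}. i \<le> j \<longrightarrow> mu i \<le> mu j"
    and delta_def: "delta = alpha / (2 * real (card J))"
    and hb: "\<forall>i\<in>{1..n}. v i / phi \<in> \<nat> \<and> 0 < mu i \<and> mu i < 1 \<and>
        (\<forall>l. measure M {\<omega> \<in> space M. N i \<omega> = l} = bin_fam phi (v i) (mu i) l)"
  shows "measure M {\<omega> \<in> space M. \<forall>i\<in>{1..n}.
          conf_L J mu i (\<lambda>j k. l_delta bin_fam {0<..<1} delta (Zjk phi v N \<omega> j k) (vsum v j k) phi) \<le> ereal (mu i)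
        \<and> ereal (mu i) \<le> conf_U J mu i (\<lambda>j k. u_delta bin_fam {0<..<1} delta (Zjk phi v N \<omega> j k) (vsum v j k) phi)}
        \<ge> 1 - alpha" and "(AE \<omega> in M. \<forall>i\<in>{1..n}.
          conf_L J mu i (\<lambda>j k. l_delta bin_fam {0<..<1} delta (Zjk phi v N \<omega> j k) (vsum v j k) phi)
          = conf_L J mu i (\<lambda>j k. ereal
              (q_B delta (vsum v j k * Zjk phi v N \<omega> j k / phi)
                   (1 + vsum v j k / phi - vsum v j k * Zjk phi v N \<omega> j k / phi)
               * of_bool (Zjk phi v N \<omega> j k > 0)))
        \<and> conf_U J mu i (\<lambda>j k. u_delta bin_fam {0<..<1} delta (Zjk phi v N \<omega> j k) (vsum v j k) phi)
          = conf_U J mu i (\<lambda>j k. ereal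
              (q_B (1 - delta) (1 + vsum v j k * Zjk phi v N \<omega> j k / phi)
                   (vsum v j k / phi - vsum v j k * Zjk phi v N \<omega> j k / phi)
               * of_bool (Zjk phi v N \<omega> j k < 1)
               + of_bool (Zjk phi v N \<omega> j k = 1))))"
proof -
  interpret prob_space M by (rule assms(1))
  have pmf: "\<And>i l. i \<in> {1..n} \<Longrightarrow> prob {\<omega>\<in>space M. N i \<omega> = l} = bin_fam phi (v i) (mu i) l"
    using hb by blast
  have Th: "\<And>i. i \<in> {1..n} \<Longrightarrow> mu i \<in> {0<..<1}" using hb by auto
  define admb where "admb V = (0 < V \<and> V / phi \<in> \<nat>)" for V
  have bf: "bin_fam phi V = bin_pf m" if "V / phi = real m" for V m
    unfolding bin_fam_def that by simp
  have admm: "\<exists>m. V / phi = real m" if "admb V" for V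
    using that unfolding admb_def by (auto elim!: Nats_cases)
  show "measure M {\<omega> \<in> space M. \<forall>i\<in>{1..n}.
          conf_L J mu i (\<lambda>j k. l_delta bin_fam {0<..<1} delta (Zjk phi v N \<omega> j k) (vsum v j k) phi) \<le> ereal (mu i)
        \<and> ereal (mu i) \<le> conf_U J mu i (\<lambda>j k. u_delta bin_fam {0<..<1} delta (Zjk phi v N \<omega> j k) (vsum v j k) phi)}
        \<ge> 1 - alpha"
  proof (rule coverage[where adm = admb, OF indep v_pos phi_pos alpha J_sub J_ord mu_mono delta_def])
    show "\<And>i l. i \<in> {1..n} \<Longrightarrow> prob {\<omega>\<in>space M. N i \<omega> = l} = bin_fam phi (v i) (mu i) l" by (rule pmf)
    show "\<And>i. i \<in> {1..n} \<Longrightarrow> admb (v i)" using v_pos hb by (auto simp: admb_def)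
    show "\<And>V W. admb V \<Longrightarrow> admb W \<Longrightarrow> admb (V + W)"
      by (auto simp: admb_def add_divide_distrib)
    show "\<And>i. i \<in> {1..n} \<Longrightarrow> mu i \<in> {0<..<1}" by (rule Th)
    show "\<And>V mu l. admb V \<Longrightarrow> mu \<in> {0<..<1} \<Longrightarrow> 0 \<le> bin_fam phi V mu l"
      by (auto simp: bin_fam_def bin_pf_def)
    show "\<And>V W mu s. admb V \<Longrightarrow> admb W \<Longrightarrow> mu \<in> {0<..<1} \<Longrightarrow>
       (\<Sum>r\<le>s. bin_fam phi V mu r * bin_fam phi W mu (s - r)) = bin_fam phi (V + W) mu s"
    proof -
      fix V W mu :: real and s :: nat assume "admb V" "admb W"
      then obtain m1 m2 where m: "V / phi = real m1" "W / phi = real m2" using admm by blast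
      then have "(V + W) / phi = real (m1 + m2)" by (simp add: add_divide_distrib)
      then show "(\<Sum>r\<le>s. bin_fam phi V mu r * bin_fam phi W mu (s - r)) = bin_fam phi (V + W) mu s"
        using bf[OF m(1)] bf[OF m(2)] bf[of "V + W" "m1 + m2"] bin_pf_conv by simp
    qed
    show "\<And>V mu (mu'::real) x. admb V \<Longrightarrow> mu \<in> {0<..<1} \<Longrightarrow> mu' \<in> {0<..<1} \<Longrightarrow> mu \<le> mu' \<Longrightarrow>
       (\<Sum>l\<le>x. bin_fam phi V mu' l) \<le> (\<Sum>l\<le>x. bin_fam phi V mu l)"
    proof -
      fix V mu mu' :: real and x :: nat assume "admb V" "mu \<in> {0<..<1}" "mu' \<in> {0<..<1}" "mu \<le> mu'"
      moreover obtain m where "V / phi = real m" using admm \<open>admb V\<close> by blast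
      ultimately show "(\<Sum>l\<le>x. bin_fam phi V mu' l) \<le> (\<Sum>l\<le>x. bin_fam phi V mu l)"
        using bf bin_mono by simp
    qed
  qed
  define mm where "mm i = nat \<lfloor>v i / phi\<rfloor>" for i
  have mmeq: "v i / phi = real (mm i)" if "i \<in> {1..n}" for i
  proof -
    have "v i / phi \<in> \<nat>" using hb that by blast
    then obtain k where "v i / phi = real k" by (auto elim: Nats_cases)
    then show ?thesis by (simp add: mm_def)
  qed
  have AEi: "AE \<omega> in M. N i \<omega> \<le> mm i" if i: "i \<in> {1..n}" for i
  proof -
    define B where "B = (\<Union>l. {\<omega>\<in>space M. N i \<omega> = mm i + Suc l})"
    have "{\<omega>\<in>space M. N i \<omega> = mm i + Suc l} \<in> null_sets M" for l
    proof -
      have s: "{\<omega>\<in>space M. N i \<omega> = mm i + Suc l} \<in> sets M"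
        by (rule nat_event[OF N_meas[OF indep i]])
      have "prob {\<omega>\<in>space M. N i \<omega> = mm i + Suc l} = 0"
        using pmf[OF i] bf[OF mmeq[OF i]] by (simp add: bin_pf_def)
      then show ?thesis using s by (simp add: null_sets_def emeasure_eq_measure)
    qed
    then have "B \<in> null_sets M" unfolding B_def by (intro null_sets_UN) auto
    moreover have "{\<omega>\<in>space M. \<not> N i \<omega> \<le> mm i} \<subseteq> B"
    proof
      fix \<omega> assume "\<omega> \<in> {\<omega>\<in>space M. \<not> N i \<omega> \<le> mm i}"
      then have "\<omega> \<in> space M" "N i \<omega> = mm i + Suc (N i \<omega> - mm i - 1)" by auto
      then show "\<omega> \<in> B" unfolding B_def by blast
    qed
    ultimately show ?thesis by (rule AE_I')
  qed
  have AEall: "AE \<omega> in M. \<forall>i\<in>{1..n}. N i \<omega> \<le> mm i"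
    using AEi by (subst AE_finite_all) auto
  show "(AE \<omega> in M. \<forall>i\<in>{1..n}.
          conf_L J mu i (\<lambda>j k. l_delta bin_fam {0<..<1} delta (Zjk phi v N \<omega> j k) (vsum v j k) phi)
          = conf_L J mu i (\<lambda>j k. ereal
              (q_B delta (vsum v j k * Zjk phi v N \<omega> j k / phi)
                   (1 + vsum v j k / phi - vsum v j k * Zjk phi v N \<omega> j k / phi)
               * of_bool (Zjk phi v N \<omega> j k > 0)))
        \<and> conf_U J mu i (\<lambda>j k. u_delta bin_fam {0<..<1} delta (Zjk phi v N \<omega> j k) (vsum v j k) phi)
          = conf_U J mu i (\<lambda>j k. ereal
              (q_B (1 - delta) (1 + vsum v j k * Zjk phi v N \<omega> j k / phi)
                   (vsum v j k / phi - vsum v j k * Zjk phi v N \<omega> j k / phi)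
               * of_bool (Zjk phi v N \<omega> j k < 1)
               + of_bool (Zjk phi v N \<omega> j k = 1))))"
    using AEall
  proof eventually_elim
    case (elim \<omega>)
    have L: "l_delta bin_fam {0<..<1} delta (Zjk phi v N \<omega> j k) (vsum v j k) phi = ereal
              (q_B delta (vsum v j k * Zjk phi v N \<omega> j k / phi)
                   (1 + vsum v j k / phi - vsum v j k * Zjk phi v N \<omega> j k / phi)
               * of_bool (Zjk phi v N \<omega> j k > 0))"
     and U: "u_delta bin_fam {0<..<1} delta (Zjk phi v N \<omega> j k) (vsum v j k) phi = ereal
              (q_B (1 - delta) (1 + vsum v j k * Zjk phi v N \<omega> j k / phi)
                   (vsum v j k / phi - vsum v j k * Zjk phi v N \<omega> j k / phi)
               * of_bool (Zjk phi v N \<omega> j k < 1)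
               + of_bool (Zjk phi v N \<omega> j k = 1))" if jk: "(j, k) \<in> J" for j k
    proof -
      note Z0 = Zjk_J[OF v_pos J_sub J_ord jk]
      have Z1: "Zjk phi v N \<omega> j k = phi * real (\<Sum>i\<in>{j..k}. N i \<omega>) / vsum v j k" by (rule Z0(1))
      note Z = Z1 Z0(2-4)
      have d: "0 < delta" "delta < 1" using delta_bounds[OF J_sub alpha delta_def jk] by auto
      have mj: "vsum v j k / phi = real (\<Sum>i\<in>{j..k}. mm i)"
        unfolding vsum_def sum_divide_distrib using Z(3) mmeq by (auto intro!: sum.cong)
      have Xle: "(\<Sum>i\<in>{j..k}. N i \<omega>) \<le> (\<Sum>i\<in>{j..k}. mm i)"
        using elim Z(3) by (intro sum_mono) auto
      show "l_delta bin_fam {0<..<1} delta (Zjk phi v N \<omega> j k) (vsum v j k) phi = ereal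
              (q_B delta (vsum v j k * Zjk phi v N \<omega> j k / phi)
                   (1 + vsum v j k / phi - vsum v j k * Zjk phi v N \<omega> j k / phi)
               * of_bool (Zjk phi v N \<omega> j k > 0))"
        by (rule bin_L[OF phi_pos Z(2) mj Xle Z(1) d])
      show "u_delta bin_fam {0<..<1} delta (Zjk phi v N \<omega> j k) (vsum v j k) phi = ereal
              (q_B (1 - delta) (1 + vsum v j k * Zjk phi v N \<omega> j k / phi)
                   (vsum v j k / phi - vsum v j k * Zjk phi v N \<omega> j k / phi)
               * of_bool (Zjk phi v N \<omega> j k < 1)
               + of_bool (Zjk phi v N \<omega> j k = 1))"
        by (rule bin_U[OF phi_pos Z(2) mj Xle Z(1) d])
    qed
    show ?case using L U by (auto intro!: conf_L_cong conf_U_cong)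
  qed
qed

lemma poi_part:
  fixes M :: "'a measure" and n :: nat and N :: "nat \<Rightarrow> 'a \<Rightarrow> nat"
    and v mu :: "nat \<Rightarrow> real" and phi alpha delta :: real and J :: "(nat \<times> nat) set"
  assumes "prob_space M"
    and indep: "prob_space.indep_vars M (\<lambda>_. count_space UNIV) N {1..n}"
    and v_pos: "\<forall>i\<in>{1..n}. 0 < v i"
    and phi_pos: "0 < phi"
    and alpha: "0 < alpha" "alpha < 1"
    and J_sub: "J \<subseteq> {1..n} \<times> {1..n}"
    and J_ord: "\<forall>(j, k)\<in>J. j \<le> k"
    and mu_mono: "\<forall>i\<in>{1..n}. \<forall>j\<in>{1..n}. i \<le> j \<longrightarrow> mu i \<le> mu j"
    and delta_def: "delta = alpha / (2 * real (card J))"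
    and hb: "\<forall>i\<in>{1..n}. 0 < mu i \<and>
        (\<forall>l. measure M {\<omega> \<in> space M. N i \<omega> = l} = poi_fam phi (v i) (mu i) l)"
  shows "measure M {\<omega> \<in> space M. \<forall>i\<in>{1..n}.
          conf_L J mu i (\<lambda>j k. l_delta poi_fam {0<..} delta (Zjk phi v N \<omega> j k) (vsum v j k) phi) \<le> ereal (mu i)
        \<and> ereal (mu i) \<le> conf_U J mu i (\<lambda>j k. u_delta poi_fam {0<..} delta (Zjk phi v N \<omega> j k) (vsum v j k) phi)}
        \<ge> 1 - alpha" and "(AE \<omega> in M. \<forall>i\<in>{1..n}.
          conf_L J mu i (\<lambda>j k. l_delta poi_fam {0<..} delta (Zjk phi v N \<omega> j k) (vsum v j k) phi)
          = conf_L J mu i (\<lambda>j k. ereal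
              (phi * q_Gamma delta (vsum v j k * Zjk phi v N \<omega> j k / phi) 1 / vsum v j k
               * of_bool (Zjk phi v N \<omega> j k > 0)))
        \<and> conf_U J mu i (\<lambda>j k. u_delta poi_fam {0<..} delta (Zjk phi v N \<omega> j k) (vsum v j k) phi)
          = conf_U J mu i (\<lambda>j k. ereal
              (phi * q_Gamma (1 - delta) (1 + vsum v j k * Zjk phi v N \<omega> j k / phi) 1 / vsum v j k)))"
proof -
  interpret prob_space M by (rule assms(1))
  have pmf: "\<And>i l. i \<in> {1..n} \<Longrightarrow> prob {\<omega>\<in>space M. N i \<omega> = l} = poi_fam phi (v i) (mu i) l"
    using hb by blast
  have Th: "\<And>i. i \<in> {1..n} \<Longrightarrow> mu i \<in> {0<..}" using hb by auto
  show "measure M {\<omega> \<in> space M. \<forall>i\<in>{1..n}.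
          conf_L J mu i (\<lambda>j k. l_delta poi_fam {0<..} delta (Zjk phi v N \<omega> j k) (vsum v j k) phi) \<le> ereal (mu i)
        \<and> ereal (mu i) \<le> conf_U J mu i (\<lambda>j k. u_delta poi_fam {0<..} delta (Zjk phi v N \<omega> j k) (vsum v j k) phi)}
        \<ge> 1 - alpha"
  proof (rule coverage[where adm = "\<lambda>V. 0 < V", OF indep v_pos phi_pos alpha J_sub J_ord mu_mono delta_def])
    show "\<And>i l. i \<in> {1..n} \<Longrightarrow> prob {\<omega>\<in>space M. N i \<omega> = l} = poi_fam phi (v i) (mu i) l" by (rule pmf)
    show "\<And>i. i \<in> {1..n} \<Longrightarrow> 0 < v i" using v_pos by auto
    show "\<And>V W::real. 0 < V \<Longrightarrow> 0 < W \<Longrightarrow> 0 < V + W" by simp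
    show "\<And>i. i \<in> {1..n} \<Longrightarrow> mu i \<in> {0<..}" by (rule Th)
    show "\<And>V mu l. 0 < V \<Longrightarrow> mu \<in> {0<..} \<Longrightarrow> 0 \<le> poi_fam phi V mu l"
      using phi_pos by (auto simp: poi_fam_def poi_pf_def)
    show "\<And>V W mu s. 0 < V \<Longrightarrow> 0 < W \<Longrightarrow> mu \<in> {0<..} \<Longrightarrow>
       (\<Sum>r\<le>s. poi_fam phi V mu r * poi_fam phi W mu (s - r)) = poi_fam phi (V + W) mu s"
    proof -
      fix V W mu :: real and s :: nat
      have "mu * (V + W) / phi = mu * V / phi + mu * W / phi" by (simp add: distrib_left add_divide_distrib)
      then show "(\<Sum>r\<le>s. poi_fam phi V mu r * poi_fam phi W mu (s - r)) = poi_fam phi (V + W) mu s"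
        unfolding poi_fam_def using poi_pf_conv by simp
    qed
    show "\<And>V mu (mu'::real) x. 0 < V \<Longrightarrow> mu \<in> {0<..} \<Longrightarrow> mu' \<in> {0<..} \<Longrightarrow> mu \<le> mu' \<Longrightarrow>
       (\<Sum>l\<le>x. poi_fam phi V mu' l) \<le> (\<Sum>l\<le>x. poi_fam phi V mu l)"
    proof -
      fix V mu mu' :: real and x :: nat assume "0 < V" "mu \<in> {0<..}" "mu' \<in> {0<..}" "mu \<le> mu'"
      then have "0 \<le> mu * V / phi" "mu * V / phi \<le> mu' * V / phi" using phi_pos
        by (auto intro!: divide_right_mono mult_right_mono)
      then show "(\<Sum>l\<le>x. poi_fam phi V mu' l) \<le> (\<Sum>l\<le>x. poi_fam phi V mu l)"
        unfolding poi_fam_def by (rule poi_mono)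
    qed
  qed
  show "(AE \<omega> in M. \<forall>i\<in>{1..n}.
          conf_L J mu i (\<lambda>j k. l_delta poi_fam {0<..} delta (Zjk phi v N \<omega> j k) (vsum v j k) phi)
          = conf_L J mu i (\<lambda>j k. ereal
              (phi * q_Gamma delta (vsum v j k * Zjk phi v N \<omega> j k / phi) 1 / vsum v j k
               * of_bool (Zjk phi v N \<omega> j k > 0)))
        \<and> conf_U J mu i (\<lambda>j k. u_delta poi_fam {0<..} delta (Zjk phi v N \<omega> j k) (vsum v j k) phi)
          = conf_U J mu i (\<lambda>j k. ereal
              (phi * q_Gamma (1 - delta) (1 + vsum v j k * Zjk phi v N \<omega> j k / phi) 1 / vsum v j k)))"
  proof (rule AE_I2)
    fix \<omega> assume "\<omega> \<in> space M"
    have L: "l_delta poi_fam {0<..} delta (Zjk phi v N \<omega> j k) (vsum v j k) phi = ereal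
              (phi * q_Gamma delta (vsum v j k * Zjk phi v N \<omega> j k / phi) 1 / vsum v j k
               * of_bool (Zjk phi v N \<omega> j k > 0))" and U: "u_delta poi_fam {0<..} delta (Zjk phi v N \<omega> j k) (vsum v j k) phi = ereal
              (phi * q_Gamma (1 - delta) (1 + vsum v j k * Zjk phi v N \<omega> j k / phi) 1 / vsum v j k)" if jk: "(j, k) \<in> J" for j k
    proof -
      note Z0 = Zjk_J[OF v_pos J_sub J_ord jk]
      have Z1: "Zjk phi v N \<omega> j k = phi * real (\<Sum>i\<in>{j..k}. N i \<omega>) / vsum v j k" by (rule Z0(1))
      have d: "0 < delta" "delta < 1" using delta_bounds[OF J_sub alpha delta_def jk] by auto
      show "l_delta poi_fam {0<..} delta (Zjk phi v N \<omega> j k) (vsum v j k) phi = ereal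
              (phi * q_Gamma delta (vsum v j k * Zjk phi v N \<omega> j k / phi) 1 / vsum v j k
               * of_bool (Zjk phi v N \<omega> j k > 0))" by (rule poi_L[OF phi_pos Z0(2) Z1 d])
      show "u_delta poi_fam {0<..} delta (Zjk phi v N \<omega> j k) (vsum v j k) phi = ereal
              (phi * q_Gamma (1 - delta) (1 + vsum v j k * Zjk phi v N \<omega> j k / phi) 1 / vsum v j k)" by (rule poi_U[OF phi_pos Z0(2) Z1 d])
    qed
    show "\<forall>i\<in>{1..n}. 
          conf_L J mu i (\<lambda>j k. l_delta poi_fam {0<..} delta (Zjk phi v N \<omega> j k) (vsum v j k) phi)
          = conf_L J mu i (\<lambda>j k. ereal
              (phi * q_Gamma delta (vsum v j k * Zjk phi v N \<omega> j k / phi) 1 / vsum v j k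
               * of_bool (Zjk phi v N \<omega> j k > 0)))
        \<and> conf_U J mu i (\<lambda>j k. u_delta poi_fam {0<..} delta (Zjk phi v N \<omega> j k) (vsum v j k) phi)
          = conf_U J mu i (\<lambda>j k. ereal
              (phi * q_Gamma (1 - delta) (1 + vsum v j k * Zjk phi v N \<omega> j k / phi) 1 / vsum v j k))" using L U by (auto intro!: conf_L_cong conf_U_cong)
  qed
qed

lemma nb_part:
  fixes M :: "'a measure" and n :: nat and N :: "nat \<Rightarrow> 'a \<Rightarrow> nat"
    and v mu :: "nat \<Rightarrow> real" and phi alpha delta :: real and J :: "(nat \<times> nat) set"
  assumes "prob_space M"
    and indep: "prob_space.indep_vars M (\<lambda>_. count_space UNIV) N {1..n}"
    and v_pos: "\<forall>i\<in>{1..n}. 0 < v i"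
    and phi_pos: "0 < phi"
    and alpha: "0 < alpha" "alpha < 1"
    and J_sub: "J \<subseteq> {1..n} \<times> {1..n}"
    and J_ord: "\<forall>(j, k)\<in>J. j \<le> k"
    and mu_mono: "\<forall>i\<in>{1..n}. \<forall>j\<in>{1..n}. i \<le> j \<longrightarrow> mu i \<le> mu j"
    and delta_def: "delta = alpha / (2 * real (card J))"
    and hb: "\<forall>i\<in>{1..n}. 0 < mu i \<and>
        (\<forall>l. measure M {\<omega> \<in> space M. N i \<omega> = l} = nb_fam phi (v i) (mu i) l)"
  shows "measure M {\<omega> \<in> space M. \<forall>i\<in>{1..n}.
          conf_L J mu i (\<lambda>j k. l_delta nb_fam {0<..} delta (Zjk phi v N \<omega> j k) (vsum v j k) phi) \<le> ereal (mu i)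
        \<and> ereal (mu i) \<le> conf_U J mu i (\<lambda>j k. u_delta nb_fam {0<..} delta (Zjk phi v N \<omega> j k) (vsum v j k) phi)}
        \<ge> 1 - alpha" and "(AE \<omega> in M. \<forall>i\<in>{1..n}.
          conf_L J mu i (\<lambda>j k. l_delta nb_fam {0<..} delta (Zjk phi v N \<omega> j k) (vsum v j k) phi)
          = conf_L J mu i (\<lambda>j k. ereal
              (q_B delta (vsum v j k * Zjk phi v N \<omega> j k / phi) (vsum v j k / phi)
               / (1 - q_B delta (vsum v j k * Zjk phi v N \<omega> j k / phi) (vsum v j k / phi))
               * of_bool (Zjk phi v N \<omega> j k > 0)))
        \<and> conf_U J mu i (\<lambda>j k. u_delta nb_fam {0<..} delta (Zjk phi v N \<omega> j k) (vsum v j k) phi)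
          = conf_U J mu i (\<lambda>j k. ereal
              (q_B (1 - delta) (1 + vsum v j k * Zjk phi v N \<omega> j k / phi) (vsum v j k / phi)
               / (1 - q_B (1 - delta) (1 + vsum v j k * Zjk phi v N \<omega> j k / phi) (vsum v j k / phi)))))"
proof -
  interpret prob_space M by (rule assms(1))
  have pmf: "\<And>i l. i \<in> {1..n} \<Longrightarrow> prob {\<omega>\<in>space M. N i \<omega> = l} = nb_fam phi (v i) (mu i) l"
    using hb by blast
  have Th: "\<And>i. i \<in> {1..n} \<Longrightarrow> mu i \<in> {0<..}" using hb by auto
  have pint: "mu / (1 + mu) \<in> {0<..<1}" if "0 < mu" for mu :: real
    using that by (simp add: divide_less_eq)
  show "measure M {\<omega> \<in> space M. \<forall>i\<in>{1..n}.
          conf_L J mu i (\<lambda>j k. l_delta nb_fam {0<..} delta (Zjk phi v N \<omega> j k) (vsum v j k) phi) \<le> ereal (mu i)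
        \<and> ereal (mu i) \<le> conf_U J mu i (\<lambda>j k. u_delta nb_fam {0<..} delta (Zjk phi v N \<omega> j k) (vsum v j k) phi)}
        \<ge> 1 - alpha"
  proof (rule coverage[where adm = "\<lambda>V. 0 < V", OF indep v_pos phi_pos alpha J_sub J_ord mu_mono delta_def])
    show "\<And>i l. i \<in> {1..n} \<Longrightarrow> prob {\<omega>\<in>space M. N i \<omega> = l} = nb_fam phi (v i) (mu i) l" by (rule pmf)
    show "\<And>i. i \<in> {1..n} \<Longrightarrow> 0 < v i" using v_pos by auto
    show "\<And>V W::real. 0 < V \<Longrightarrow> 0 < W \<Longrightarrow> 0 < V + W" by simp
    show "\<And>i. i \<in> {1..n} \<Longrightarrow> mu i \<in> {0<..}" by (rule Th)
    show "\<And>V mu l. 0 < V \<Longrightarrow> mu \<in> {0<..} \<Longrightarrow> 0 \<le> nb_fam phi V mu l"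
    proof -
      fix V mu :: real and l :: nat assume "0 < V" "mu \<in> {0<..}"
      then have g: "0 < V / phi" and p: "mu / (1 + mu) \<in> {0<..<1}" using phi_pos pint by auto
      have "Gamma (real l + V / phi) > 0" "Gamma (V / phi) > 0" using g by (auto intro!: Gamma_real_pos)
      then show "0 \<le> nb_fam phi V mu l" using p unfolding nb_fam_def nb_pf_def by auto
    qed
    show "\<And>V W mu s. 0 < V \<Longrightarrow> 0 < W \<Longrightarrow> mu \<in> {0<..} \<Longrightarrow>
       (\<Sum>r\<le>s. nb_fam phi V mu r * nb_fam phi W mu (s - r)) = nb_fam phi (V + W) mu s"
    proof -
      fix V W mu :: real and s :: nat assume "0 < V" "0 < W" "mu \<in> {0<..}"
      then have g: "0 < V / phi" "0 < W / phi" and p: "mu / (1 + mu) < 1" using phi_pos pint by auto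
      have "(V + W) / phi = V / phi + W / phi" by (simp add: add_divide_distrib)
      then show "(\<Sum>r\<le>s. nb_fam phi V mu r * nb_fam phi W mu (s - r)) = nb_fam phi (V + W) mu s"
        unfolding nb_fam_def using nb_pf_conv[OF g p] by simp
    qed
    show "\<And>V mu (mu'::real) x. 0 < V \<Longrightarrow> mu \<in> {0<..} \<Longrightarrow> mu' \<in> {0<..} \<Longrightarrow> mu \<le> mu' \<Longrightarrow>
       (\<Sum>l\<le>x. nb_fam phi V mu' l) \<le> (\<Sum>l\<le>x. nb_fam phi V mu l)"
    proof -
      fix V mu mu' :: real and x :: nat assume a: "0 < V" "mu \<in> {0<..}" "mu' \<in> {0<..}" "mu \<le> mu'"
      then have g: "0 < V / phi" using phi_pos by simp
      have p: "mu / (1 + mu) \<in> {0<..<1}" "mu' / (1 + mu') \<in> {0<..<1}" using a pint by auto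
      have "mu / (1 + mu) \<le> mu' / (1 + mu')" using a by (simp add: divide_simps) (simp add: algebra_simps)
      then show "(\<Sum>l\<le>x. nb_fam phi V mu' l) \<le> (\<Sum>l\<le>x. nb_fam phi V mu l)"
        unfolding nb_fam_def using p by (intro nb_mono g) auto
    qed
  qed
  show "(AE \<omega> in M. \<forall>i\<in>{1..n}.
          conf_L J mu i (\<lambda>j k. l_delta nb_fam {0<..} delta (Zjk phi v N \<omega> j k) (vsum v j k) phi)
          = conf_L J mu i (\<lambda>j k. ereal
              (q_B delta (vsum v j k * Zjk phi v N \<omega> j k / phi) (vsum v j k / phi)
               / (1 - q_B delta (vsum v j k * Zjk phi v N \<omega> j k / phi) (vsum v j k / phi))
               * of_bool (Zjk phi v N \<omega> j k > 0)))
        \<and> conf_U J mu i (\<lambda>j k. u_delta nb_fam {0<..} delta (Zjk phi v N \<omega> j k) (vsum v j k) phi)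
          = conf_U J mu i (\<lambda>j k. ereal
              (q_B (1 - delta) (1 + vsum v j k * Zjk phi v N \<omega> j k / phi) (vsum v j k / phi)
               / (1 - q_B (1 - delta) (1 + vsum v j k * Zjk phi v N \<omega> j k / phi) (vsum v j k / phi)))))"
  proof (rule AE_I2)
    fix \<omega> assume "\<omega> \<in> space M"
    have L: "l_delta nb_fam {0<..} delta (Zjk phi v N \<omega> j k) (vsum v j k) phi = ereal
              (q_B delta (vsum v j k * Zjk phi v N \<omega> j k / phi) (vsum v j k / phi)
               / (1 - q_B delta (vsum v j k * Zjk phi v N \<omega> j k / phi) (vsum v j k / phi))
               * of_bool (Zjk phi v N \<omega> j k > 0))" and U: "u_delta nb_fam {0<..} delta (Zjk phi v N \<omega> j k) (vsum v j k) phi = ereal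
              (q_B (1 - delta) (1 + vsum v j k * Zjk phi v N \<omega> j k / phi) (vsum v j k / phi)
               / (1 - q_B (1 - delta) (1 + vsum v j k * Zjk phi v N \<omega> j k / phi) (vsum v j k / phi)))" if jk: "(j, k) \<in> J" for j k
    proof -
      note Z0 = Zjk_J[OF v_pos J_sub J_ord jk]
      have Z1: "Zjk phi v N \<omega> j k = phi * real (\<Sum>i\<in>{j..k}. N i \<omega>) / vsum v j k" by (rule Z0(1))
      have d: "0 < delta" "delta < 1" using delta_bounds[OF J_sub alpha delta_def jk] by auto
      show "l_delta nb_fam {0<..} delta (Zjk phi v N \<omega> j k) (vsum v j k) phi = ereal
              (q_B delta (vsum v j k * Zjk phi v N \<omega> j k / phi) (vsum v j k / phi)
               / (1 - q_B delta (vsum v j k * Zjk phi v N \<omega> j k / phi) (vsum v j k / phi))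
               * of_bool (Zjk phi v N \<omega> j k > 0))" by (rule nb_L[OF phi_pos Z0(2) Z1 d])
      show "u_delta nb_fam {0<..} delta (Zjk phi v N \<omega> j k) (vsum v j k) phi = ereal
              (q_B (1 - delta) (1 + vsum v j k * Zjk phi v N \<omega> j k / phi) (vsum v j k / phi)
               / (1 - q_B (1 - delta) (1 + vsum v j k * Zjk phi v N \<omega> j k / phi) (vsum v j k / phi)))" by (rule nb_U[OF phi_pos Z0(2) Z1 d])
    qed
    show "\<forall>i\<in>{1..n}. 
          conf_L J mu i (\<lambda>j k. l_delta nb_fam {0<..} delta (Zjk phi v N \<omega> j k) (vsum v j k) phi)
          = conf_L J mu i (\<lambda>j k. ereal
              (q_B delta (vsum v j k * Zjk phi v N \<omega> j k / phi) (vsum v j k / phi)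
               / (1 - q_B delta (vsum v j k * Zjk phi v N \<omega> j k / phi) (vsum v j k / phi))
               * of_bool (Zjk phi v N \<omega> j k > 0)))
        \<and> conf_U J mu i (\<lambda>j k. u_delta nb_fam {0<..} delta (Zjk phi v N \<omega> j k) (vsum v j k) phi)
          = conf_U J mu i (\<lambda>j k. ereal
              (q_B (1 - delta) (1 + vsum v j k * Zjk phi v N \<omega> j k / phi) (vsum v j k / phi)
               / (1 - q_B (1 - delta) (1 + vsum v j k * Zjk phi v N \<omega> j k / phi) (vsum v j k / phi))))" using L U by (auto intro!: conf_L_cong conf_U_cong)
  qed
qed

theorem proposition5p1:
  fixes M :: "'a measure" and n :: nat and N :: "nat \<Rightarrow> 'a \<Rightarrow> nat"
    and v mu :: "nat \<Rightarrow> real" and phi alpha delta :: real and J :: "(nat \<times> nat) set"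
  assumes "prob_space M"
    and indep: "prob_space.indep_vars M (\<lambda>_. count_space UNIV) N {1..n}"
    and v_pos: "\<forall>i\<in>{1..n}. 0 < v i"
    and phi_pos: "0 < phi"
    and alpha: "0 < alpha" "alpha < 1"
    and J_sub: "J \<subseteq> {1..n} \<times> {1..n}"
    and J_ord: "\<forall>(j, k)\<in>J. j \<le> k"
    and mu_mono: "\<forall>i\<in>{1..n}. \<forall>j\<in>{1..n}. i \<le> j \<longrightarrow> mu i \<le> mu j"
    and delta_def: "delta = alpha / (2 * real (card J))"
  shows
   "((\<forall>i\<in>{1..n}. v i / phi \<in> \<nat> \<and> 0 < mu i \<and> mu i < 1 \<and>
        (\<forall>l. measure M {\<omega> \<in> space M. N i \<omega> = l} = bin_fam phi (v i) (mu i) l)) \<longrightarrow>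
      measure M {\<omega> \<in> space M. \<forall>i\<in>{1..n}.
          conf_L J mu i (\<lambda>j k. l_delta bin_fam {0<..<1} delta (Zjk phi v N \<omega> j k) (vsum v j k) phi) \<le> ereal (mu i)
        \<and> ereal (mu i) \<le> conf_U J mu i (\<lambda>j k. u_delta bin_fam {0<..<1} delta (Zjk phi v N \<omega> j k) (vsum v j k) phi)}
        \<ge> 1 - alpha
    \<and> (AE \<omega> in M. \<forall>i\<in>{1..n}.
          conf_L J mu i (\<lambda>j k. l_delta bin_fam {0<..<1} delta (Zjk phi v N \<omega> j k) (vsum v j k) phi)
          = conf_L J mu i (\<lambda>j k. ereal
              (q_B delta (vsum v j k * Zjk phi v N \<omega> j k / phi)
                   (1 + vsum v j k / phi - vsum v j k * Zjk phi v N \<omega> j k / phi)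
               * of_bool (Zjk phi v N \<omega> j k > 0)))
        \<and> conf_U J mu i (\<lambda>j k. u_delta bin_fam {0<..<1} delta (Zjk phi v N \<omega> j k) (vsum v j k) phi)
          = conf_U J mu i (\<lambda>j k. ereal
              (q_B (1 - delta) (1 + vsum v j k * Zjk phi v N \<omega> j k / phi)
                   (vsum v j k / phi - vsum v j k * Zjk phi v N \<omega> j k / phi)
               * of_bool (Zjk phi v N \<omega> j k < 1)
               + of_bool (Zjk phi v N \<omega> j k = 1)))))
  \<and> ((\<forall>i\<in>{1..n}. 0 < mu i \<and>
        (\<forall>l. measure M {\<omega> \<in> space M. N i \<omega> = l} = poi_fam phi (v i) (mu i) l)) \<longrightarrow>
      measure M {\<omega> \<in> space M. \<forall>i\<in>{1..n}.
          conf_L J mu i (\<lambda>j k. l_delta poi_fam {0<..} delta (Zjk phi v N \<omega> j k) (vsum v j k) phi) \<le> ereal (mu i)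
        \<and> ereal (mu i) \<le> conf_U J mu i (\<lambda>j k. u_delta poi_fam {0<..} delta (Zjk phi v N \<omega> j k) (vsum v j k) phi)}
        \<ge> 1 - alpha
    \<and> (AE \<omega> in M. \<forall>i\<in>{1..n}.
          conf_L J mu i (\<lambda>j k. l_delta poi_fam {0<..} delta (Zjk phi v N \<omega> j k) (vsum v j k) phi)
          = conf_L J mu i (\<lambda>j k. ereal
              (phi * q_Gamma delta (vsum v j k * Zjk phi v N \<omega> j k / phi) 1 / vsum v j k
               * of_bool (Zjk phi v N \<omega> j k > 0)))
        \<and> conf_U J mu i (\<lambda>j k. u_delta poi_fam {0<..} delta (Zjk phi v N \<omega> j k) (vsum v j k) phi)
          = conf_U J mu i (\<lambda>j k. ereal
              (phi * q_Gamma (1 - delta) (1 + vsum v j k * Zjk phi v N \<omega> j k / phi) 1 / vsum v j k))))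
  \<and> ((\<forall>i\<in>{1..n}. 0 < mu i \<and>
        (\<forall>l. measure M {\<omega> \<in> space M. N i \<omega> = l} = nb_fam phi (v i) (mu i) l)) \<longrightarrow>
      measure M {\<omega> \<in> space M. \<forall>i\<in>{1..n}.
          conf_L J mu i (\<lambda>j k. l_delta nb_fam {0<..} delta (Zjk phi v N \<omega> j k) (vsum v j k) phi) \<le> ereal (mu i)
        \<and> ereal (mu i) \<le> conf_U J mu i (\<lambda>j k. u_delta nb_fam {0<..} delta (Zjk phi v N \<omega> j k) (vsum v j k) phi)}
        \<ge> 1 - alpha
    \<and> (AE \<omega> in M. \<forall>i\<in>{1..n}.
          conf_L J mu i (\<lambda>j k. l_delta nb_fam {0<..} delta (Zjk phi v N \<omega> j k) (vsum v j k) phi)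
          = conf_L J mu i (\<lambda>j k. ereal
              (q_B delta (vsum v j k * Zjk phi v N \<omega> j k / phi) (vsum v j k / phi)
               / (1 - q_B delta (vsum v j k * Zjk phi v N \<omega> j k / phi) (vsum v j k / phi))
               * of_bool (Zjk phi v N \<omega> j k > 0)))
        \<and> conf_U J mu i (\<lambda>j k. u_delta nb_fam {0<..} delta (Zjk phi v N \<omega> j k) (vsum v j k) phi)
          = conf_U J mu i (\<lambda>j k. ereal
              (q_B (1 - delta) (1 + vsum v j k * Zjk phi v N \<omega> j k / phi) (vsum v j k / phi)
               / (1 - q_B (1 - delta) (1 + vsum v j k * Zjk phi v N \<omega> j k / phi) (vsum v j k / phi))))))"
  using bin_part[OF assms] poi_part[OF assms] nb_part[OF assms] by blast

end
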